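(* Let $n$ be a positive integer, $G=\mathbb{Z}\times\mathbb{Z}_n=\langle z\rangle\times\langle a\rangle$, and let $\mathcal{S}$ be a Schur ring over $G$. Let $H$ be the maximal $\mathcal{S}$-subgroup of $G$ contained in $\mathbb{Z}$. Suppose $n\mid[\mathbb{Z}:H]$, and let $K$ be the unique subgroup of $\mathbb{Z}$ with $[K:H]=n$ (if $[\mathbb{Z}:H]=\infty$, i.e. $H=1$, set $K=1$). Then every $\mathcal{S}$-class contained in $G\setminus(K\times\mathbb{Z}_n)$ is a union of cosets of some nontrivial $\mathcal{S}$-subgroup of $\mathbb{Z}_n$.
   Context: $F$ is a field of characteristic $0$; $\mathbb{Z}=\langle z\rangle$ is infinite cyclic and $\mathbb{Z}_n=\langle a\rangle$ is cyclic of order $n$, written multiplicatively. For finite $C\subseteq G$, $\overline{C}=\sum_{g\in C}g\in F[G]$ and $C^*=\{g^{-1}:g\in C\}$. A Schur ring over $G$ is a subspace $\mathcal{S}=\mathrm{Span}_F\{\overline{C}:C\in\mathcal{D}\}$ of $F[G]$, where $\mathcal{D}=\mathcal{D}(\mathcal{S})$ is a partition of $G$ into finite subsets with $\{1\}\in\mathcal{D}$, $C\in\mathcal{D}\Rightarrow C^*\in\mathcal{D}$, and each product $\overline{C}\,\overline{D}$ ($C,D\in\mathcal{D}$) a finite $F$-linear combination of the $\overline{E}$, $E\in\mathcal{D}$. Members of $\mathcal{D}(\mathcal{S})$ are $\mathcal{S}$-classes; an $\mathcal{S}$-subset is a union of $\mathcal{S}$-classes; an $\mathcal{S}$-subgroup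 is a subgroup which is an $\mathcal{S}$-subset (the $\mathcal{S}$-subgroups contained in $\mathbb{Z}$ have a unique maximal element). *)

theory Defs
  imports Main
begin

text \<open>The group G = Z x Z_n, written additively on pairs (k, j) with k :: int and
  j \<in> {0..<n}; (k,j) stands for z^k a^j.\<close>

definition grp :: "nat \<Rightarrow> (int \<times> int) set" where
  "grp n = UNIV \<times> {0..<int n}"

definition gmul :: "nat \<Rightarrow> int \<times> int \<Rightarrow> int \<times> int \<Rightarrow> int \<times> int" where
  "gmul n x y = (fst x + fst y, (snd x + snd y) mod int n)"

definition ginv :: "nat \<Rightarrow> int \<times> int \<Rightarrow> int \<times> int" where
  "ginv n x = (- fst x, (- snd x) mod int n)"

definition gone :: "int \<times> int" where
  "gone = (0, 0)"

definition Zpart :: "(int \<times> int) set" where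
  "Zpart = {(k, 0) | k. True}"

definition Znpart :: "nat \<Rightarrow> (int \<times> int) set" where
  "Znpart n = {0} \<times> {0..<int n}"

text \<open>Elements of the group algebra F[G]: finitely supported functions G -> F
  (identified with functions on int x int vanishing outside G).
  The class sum of a finite set C.\<close>
definition csum :: "'f::field_char_0 itself \<Rightarrow> (int \<times> int) set \<Rightarrow> (int \<times> int \<Rightarrow> 'f)" where
  "csum _ C = (\<lambda>g. if g \<in> C then 1 else 0)"

definition gconv :: "nat \<Rightarrow> (int \<times> int \<Rightarrow> 'f::field_char_0) \<Rightarrow> (int \<times> int \<Rightarrow> 'f) \<Rightarrow> (int \<times> int \<Rightarrow> 'f)" where
  "gconv n f h = (\<lambda>g. \<Sum>p \<in> {(u, v). u \<in> grp n \<and> v \<in> grp n \<and> f u \<noteq> 0 \<and> h v \<noteq> 0 \<and> gmul n u v = g}.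
                        f (fst p) * h (snd p))"

text \<open>Schur ring over G with coefficients in the field 'f (of characteristic 0),
  given by its partition D of G into the S-classes.\<close>
definition schur_ring :: "'f::field_char_0 itself \<Rightarrow> nat \<Rightarrow> (int \<times> int) set set \<Rightarrow> bool" where
  "schur_ring F n D \<longleftrightarrow>
     \<Union> D = grp n \<and>
     (\<forall>C\<in>D. C \<noteq> {} \<and> finite C) \<and>
     (\<forall>C\<in>D. \<forall>C'\<in>D. C \<noteq> C' \<longrightarrow> C \<inter> C' = {}) \<and>
     {gone} \<in> D \<and>
     (\<forall>C\<in>D. ginv n ` C \<in> D) \<and>
     (\<forall>C\<in>D. \<forall>C'\<in>D. \<exists>T c. finite T \<and> T \<subseteq> D \<and>
        gconv n (csum F C) (csum F C') = (\<lambda>g. \<Sum>E\<in>T. (c E :: 'f) * csum F E g))"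

definition subgrp :: "nat \<Rightarrow> (int \<times> int) set \<Rightarrow> bool" where
  "subgrp n H \<longleftrightarrow> H \<subseteq> grp n \<and> gone \<in> H \<and>
     (\<forall>x\<in>H. \<forall>y\<in>H. gmul n x y \<in> H) \<and> (\<forall>x\<in>H. ginv n x \<in> H)"

definition S_subset :: "(int \<times> int) set set \<Rightarrow> (int \<times> int) set \<Rightarrow> bool" where
  "S_subset D X \<longleftrightarrow> (\<exists>T \<subseteq> D. X = \<Union> T)"

definition S_subgroup :: "nat \<Rightarrow> (int \<times> int) set set \<Rightarrow> (int \<times> int) set \<Rightarrow> bool" where
  "S_subgroup n D H \<longleftrightarrow> subgrp n H \<and> S_subset D H"

end

theory Submission
  imports Defs "HOL-Computational_Algebra.Primes"
begin

definition const_list :: "'a list \<Rightarrow> bool" where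
  "const_list xs \<longleftrightarrow> (\<forall>y\<in>set xs. \<forall>z\<in>set xs. y = z)"

lemma rotate1_fix_const: "rotate1 xs = xs \<Longrightarrow> const_list xs"
proof -
  assume r: "rotate1 xs = xs"
  have step: "xs ! Suc i = xs ! i" if "Suc i < length xs" for i
  proof -
    have "rotate1 xs ! i = xs ! (Suc i mod length xs)" using that by (intro nth_rotate1) auto
    then show ?thesis using r that by simp
  qed
  have all: "xs ! i = xs ! 0" if "i < length xs" for i
    using that by (induction i) (auto simp: step)
  show ?thesis unfolding const_list_def
    by (metis all in_set_conv_nth)
qed

lemma const_rotate1: "const_list xs \<Longrightarrow> rotate1 xs = xs"
proof (cases xs)
  case (Cons a ys)
  assume c: "const_list xs"
  then have "\<forall>y\<in>set xs. y = a" unfolding const_list_def using Cons by auto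
  then have "\<forall>y\<in>set ys. y = a" using Cons by auto
  then have "ys = replicate (length ys) a" by (simp add: replicate_length_same)
  then have "rotate1 xs = replicate (length ys) a @ [a]" using Cons by simp
  also have "\<dots> = a # replicate (length ys) a" by (simp add: replicate_append_same)
  also have "\<dots> = xs" using Cons \<open>ys = replicate (length ys) a\<close> by simp
  finally show ?thesis .
qed simp

lemma const_rotate_iff: "const_list (rotate i xs) \<longleftrightarrow> const_list xs"
  unfolding const_list_def by simp

lemma rotate_mult_fix: "rotate d xs = xs \<Longrightarrow> rotate (a * d) xs = xs"
proof (induction a)
  case (Suc a)
  have "rotate (Suc a * d) xs = rotate d (rotate (a * d) xs)" by (simp add: rotate_rotate add.commute)
  then show ?case using Suc by simp
qed simp

lemma rotate_period_prime:
  assumes p: "prime p" "length xs = p" and d: "0 < d" "d < p" and r: "rotate d xs = xs"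
  shows "const_list xs"
proof -
  have "coprime d p" using p d
    by (metis coprime_commute nat_dvd_not_less prime_imp_coprime_nat)
  then have "gcd d p = 1" by simp
  obtain x y where "d * x = p * y + gcd d p" using bezout_nat[of d p] d by auto
  then have xy: "d * x = p * y + 1" using \<open>gcd d p = 1\<close> by simp
  have "x * d = 1 + y * p" using xy by (simp add: algebra_simps)
  then have "(x * d) mod p = (1 + y * p) mod p" by simp
  also have "\<dots> = 1 mod p" by (rule mod_mult_self1)
  finally have "(x * d) mod p = 1 mod p" .
  then have "(x * d) mod p = 1" using prime_gt_1_nat[OF p(1)] by simp
  have "rotate (x * d) xs = xs" by (rule rotate_mult_fix[OF r])
  then have "rotate ((x*d) mod length xs) xs = xs" by (metis rotate_conv_mod)
  then have "rotate1 xs = xs" using \<open>(x * d) mod p = 1\<close> p by simp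
  then show ?thesis by (rule rotate1_fix_const)
qed

lemma necklace:
  fixes X :: "'a set" and P :: "'a list \<Rightarrow> bool"
  assumes fin: "finite X" and p: "prime p"
    and inv: "\<And>xs. P (rotate1 xs) = P xs"
  shows "card {xs. set xs \<subseteq> X \<and> length xs = p \<and> P xs} mod p = card {x\<in>X. P (replicate p x)} mod p"
proof -
  define L where "L = {xs. set xs \<subseteq> X \<and> length xs = p \<and> P xs}"
  define Fx where "Fx = {xs\<in>L. const_list xs}"
  define R where "R = L - Fx"
  define orb where "orb xs = range (\<lambda>i. rotate i xs)" for xs :: "'a list"
  have p1: "p > 1" using p prime_gt_1_nat by blast
  have finL: "finite L" unfolding L_def
    by (rule finite_subset[OF _ finite_lists_length_eq[OF fin, of p]]) auto
  have invr: "P (rotate i xs) = P xs" for i xs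
    by (induction i) (auto simp: inv)
  have Fx_eq: "Fx = (\<lambda>x. replicate p x) ` {x\<in>X. P (replicate p x)}"
  proof
    show "Fx \<subseteq> (\<lambda>x. replicate p x) ` {x\<in>X. P (replicate p x)}"
    proof
      fix xs assume "xs \<in> Fx"
      then have xs: "set xs \<subseteq> X" "length xs = p" "P xs" "const_list xs" unfolding Fx_def L_def by auto
      then have "xs \<noteq> []" using p1 by auto
      then obtain a where "a \<in> set xs" by (cases xs) auto
      then have "\<forall>y\<in>set xs. y = a" using xs(4) unfolding const_list_def by blast
      then have "xs = replicate p a" using xs(2) by (metis replicate_length_same)
      then show "xs \<in> (\<lambda>x. replicate p x) ` {x\<in>X. P (replicate p x)}"
        using xs \<open>a \<in> set xs\<close> by auto
    qed
  next
    show "(\<lambda>x. replicate p x) ` {x\<in>X. P (replicate p x)} \<subseteq> Fx"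
      using p1 unfolding Fx_def L_def const_list_def by auto
  qed
  have cardFx: "card Fx = card {x\<in>X. P (replicate p x)}"
    unfolding Fx_eq
    by (rule card_image) (use p1 in \<open>auto simp: inj_on_def\<close>)
  have orb_fin: "orb xs = (\<lambda>i. rotate i xs) ` {0..<p}" if "length xs = p" for xs
  proof
    show "orb xs \<subseteq> (\<lambda>i. rotate i xs) ` {0..<p}"
    proof
      fix ys assume "ys \<in> orb xs"
      then obtain i where "ys = rotate i xs" unfolding orb_def by blast
      then have "ys = rotate (i mod p) xs" using that by (metis rotate_conv_mod)
      then show "ys \<in> (\<lambda>i. rotate i xs) ` {0..<p}" using p1 by auto
    qed
  qed (auto simp: orb_def)
  have orb_R: "orb xs \<subseteq> R" if "xs \<in> R" for xs
    using that invr const_rotate_iff unfolding orb_def R_def Fx_def L_def by auto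
  have orb_self: "xs \<in> orb xs" for xs unfolding orb_def
    by (rule range_eqI[of _ _ 0]) simp
  have orb_card: "card (orb xs) = p" if "xs \<in> R" for xs
  proof -
    have len: "length xs = p" and nc: "\<not> const_list xs" using that unfolding R_def Fx_def L_def by auto
    have "inj_on (\<lambda>i. rotate i xs) {0..<p}"
    proof (rule inj_onI, rule ccontr)
      fix i j assume ij: "i \<in> {0..<p}" "j \<in> {0..<p}" "rotate i xs = rotate j xs" "i \<noteq> j"
      have gen: "const_list xs" if "a < p" "b < p" "a < b" "rotate a xs = rotate b xs" for a b
      proof -
        have "rotate (p - a) (rotate a xs) = rotate (p - a) (rotate b xs)" using that by simp
        then have "rotate (p - a + a) xs = rotate (p - a + b) xs" by (simp add: rotate_rotate)
        moreover have "rotate (p - a + a) xs = xs" using that len by simp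
        moreover have "rotate (p - a + b) xs = rotate (b - a) xs"
        proof -
          have e: "p - a + b = (b - a) + p" using that by simp
          have "(p - a + b) mod length xs = (b - a + p) mod p" unfolding e len ..
          also have "\<dots> = (b - a) mod p" by (rule mod_add_self2)
          also have "\<dots> = b - a" using that by simp
          finally have "(p - a + b) mod length xs = b - a" .
          moreover have "(b - a) mod length xs = b - a" using that len by simp
          ultimately show ?thesis by (metis rotate_conv_mod)
        qed
        ultimately have "rotate (b - a) xs = xs" by simp
        then show ?thesis using rotate_period_prime[OF p len, of "b - a"] that by simp
      qed
      show False
      proof (cases "i < j")
        case True then show False using gen[of i j] ij nc by auto
      next
        case False then have "j < i" using ij by simp
        then show False using gen[of j i] ij nc by auto
      qed
    qed
    then show ?thesis using orb_fin[OF len] by (simp add: card_image)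
  qed
  have orb_eq: "orb ys = orb xs" if ys_in: "ys \<in> orb xs" and len_xs: "length xs = p" for xs ys
  proof -
    obtain k where k: "ys = rotate k xs" using ys_in unfolding orb_def by blast
    show ?thesis
    proof
      show "orb ys \<subseteq> orb xs" unfolding orb_def k by (auto simp: rotate_rotate)
      show "orb xs \<subseteq> orb ys"
      proof
        fix zs assume "zs \<in> orb xs"
        then obtain i where i: "zs = rotate i xs" unfolding orb_def by blast
        have "rotate (i + (p - k mod p)) ys = rotate (i + (p - k mod p) + k) xs" unfolding k by (simp add: rotate_rotate add.commute add.left_commute)
        also have "(i + (p - k mod p) + k) mod length xs = i mod length xs"
        proof -
          have "k mod p < p" using p1 by simp
          have kk: "k = p * (k div p) + k mod p" by simp
          obtain q r where qr: "k = p * q + r" "r < p" "k mod p = r" "k div p = q"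
            using kk \<open>k mod p < p\<close> by blast
          have "i + (p - r) + (p * q + r) = i + p * (1 + q)"
            using qr(2) by (simp add: algebra_simps)
          then have e: "i + (p - k mod p) + k = i + p * (1 + k div p)" using qr by simp
          have "(i + p * (1 + k div p)) mod p = i mod p" by (rule mod_mult_self2)
          then show ?thesis unfolding e len_xs .
        qed
        then have "rotate (i + (p - k mod p) + k) xs = rotate i xs" by (metis rotate_conv_mod)
        finally show "zs \<in> orb ys" unfolding orb_def i by (metis rangeI)
      qed
    qed
  qed
  have lenR: "xs \<in> R \<Longrightarrow> length xs = p" for xs unfolding R_def L_def by auto
  have UR: "\<Union>(orb ` R) = R" using orb_R orb_self by blast
  have finR: "finite R" unfolding R_def using finL by simp
  have "p * card (orb ` R) = card (\<Union>(orb ` R))"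
  proof (rule card_partition)
    show "finite (orb ` R)" using finR by simp
    show "finite (\<Union>(orb ` R))" using UR finR by simp
    show "\<And>c. c \<in> orb ` R \<Longrightarrow> card c = p" using orb_card by blast
    show "\<And>c1 c2. c1 \<in> orb ` R \<Longrightarrow> c2 \<in> orb ` R \<Longrightarrow> c1 \<noteq> c2 \<Longrightarrow> c1 \<inter> c2 = {}"
    proof -
      fix c1 c2 assume "c1 \<in> orb ` R" "c2 \<in> orb ` R" "c1 \<noteq> c2"
      then obtain x1 x2 where x: "x1 \<in> R" "x2 \<in> R" "c1 = orb x1" "c2 = orb x2" by blast
      show "c1 \<inter> c2 = {}"
      proof (rule ccontr)
        assume "c1 \<inter> c2 \<noteq> {}"
        then obtain z where "z \<in> orb x1" "z \<in> orb x2" using x by blast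
        then have "orb z = orb x1" "orb z = orb x2" using orb_eq lenR x by blast+
        then show False using x \<open>c1 \<noteq> c2\<close> by simp
      qed
    qed
  qed
  then have cardR: "card R = p * card (orb ` R)" using UR by simp
  have FxL: "Fx \<subseteq> L" unfolding Fx_def by blast
  have "card R = card L - card Fx" unfolding R_def
    using FxL finL by (simp add: card_Diff_subset finite_subset)
  moreover have "card Fx \<le> card L" using FxL finL by (simp add: card_mono)
  ultimately have "card L = card Fx + card R" by simp
  then show ?thesis using cardFx cardR unfolding L_def by simp
qed


definition cc :: "(int \<times> int) set set \<Rightarrow> (int \<times> int \<Rightarrow> 'b) \<Rightarrow> bool" where
  "cc D f \<longleftrightarrow> (\<forall>C\<in>D. \<forall>x\<in>C. \<forall>y\<in>C. f x = f y)"

lemma sum_if_card: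
  "(\<Sum>x\<in>C. \<Sum>u\<in>C'. if P x u then (a::nat) else 0) = a * card {(x,u). x\<in>C \<and> u\<in>C' \<and> P x u}"
  if "finite C" "finite C'"
proof -
  have "(\<Sum>x\<in>C. \<Sum>u\<in>C'. if P x u then a else 0) = (\<Sum>p\<in>C \<times> C'. if P (fst p) (snd p) then a else 0)"
    by (simp add: sum.cartesian_product case_prod_beta)
  also have "\<dots> = (\<Sum>p\<in>{p\<in>C \<times> C'. P (fst p) (snd p)}. a)"
    using that by (simp add: sum.If_cases Int_def)
  also have "{p\<in>C \<times> C'. P (fst p) (snd p)} = {(x,u). x\<in>C \<and> u\<in>C' \<and> P x u}" by auto
  finally show ?thesis by simp
qed

locale SR =
  fixes F :: "'f::field_char_0 itself" and n :: nat and D :: "(int \<times> int) set set"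
  assumes npos: "n \<ge> 1" and S: "schur_ring F n D"
begin

lemma SS: "\<Union>D = grp n \<and>
     (\<forall>C\<in>D. C \<noteq> {} \<and> finite C) \<and>
     (\<forall>C\<in>D. \<forall>C'\<in>D. C \<noteq> C' \<longrightarrow> C \<inter> C' = {}) \<and>
     {gone} \<in> D \<and>
     (\<forall>C\<in>D. ginv n ` C \<in> D) \<and>
     (\<forall>C\<in>D. \<forall>C'\<in>D. \<exists>T c. finite T \<and> T \<subseteq> D \<and>
        gconv n (csum F C) (csum F C') = (\<lambda>g. \<Sum>E\<in>T. (c E :: 'f) * csum F E g))"
  using S unfolding schur_ring_def .

lemma Un_D: "\<Union>D = grp n" using SS by (rule conjunct1)
lemma cls_ne: "C \<in> D \<Longrightarrow> C \<noteq> {}" using SS by simp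
lemma cls_fin: "C \<in> D \<Longrightarrow> finite C" using SS by simp
lemma cls_disj: "C \<in> D \<Longrightarrow> C' \<in> D \<Longrightarrow> x \<in> C \<Longrightarrow> x \<in> C' \<Longrightarrow> C = C'"
proof (rule ccontr)
  assume a: "C \<in> D" "C' \<in> D" "x \<in> C" "x \<in> C'" "C \<noteq> C'"
  have "\<forall>C\<in>D. \<forall>C'\<in>D. C \<noteq> C' \<longrightarrow> C \<inter> C' = {}" using SS by (elim conjE)
  then have "C \<inter> C' = {}" using a by simp
  then show False using a by blast
qed
lemma cls_grp: "C \<in> D \<Longrightarrow> C \<subseteq> grp n"
proof -
  assume "C \<in> D" then have "C \<subseteq> \<Union>D" by (rule Union_upper)
  then show ?thesis using Un_D by simp
qed
lemma ex_cls: "x \<in> grp n \<Longrightarrow> \<exists>C\<in>D. x \<in> C" using Un_D by (simp add: Union_iff[symmetric])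
lemma one_cls: "{gone} \<in> D" using SS by (elim conjE)
lemma inv_cls: "C \<in> D \<Longrightarrow> ginv n ` C \<in> D" using SS by (elim conjE) simp
lemma prod_ax: "C \<in> D \<Longrightarrow> C' \<in> D \<Longrightarrow> \<exists>T c. finite T \<and> T \<subseteq> D \<and>
        gconv n (csum F C) (csum F C') = (\<lambda>g. \<Sum>E\<in>T. (c E :: 'f) * csum F E g)"
  using SS by (elim conjE) simp

lemma Ssub_iff: "S_subset D X \<longleftrightarrow> X \<subseteq> grp n \<and> (\<forall>C\<in>D. \<forall>x\<in>C. x \<in> X \<longrightarrow> C \<subseteq> X)"
proof
  assume "S_subset D X"
  then obtain T where T: "T \<subseteq> D" "X = \<Union>T" unfolding S_subset_def by blast
  show "X \<subseteq> grp n \<and> (\<forall>C\<in>D. \<forall>x\<in>C. x \<in> X \<longrightarrow> C \<subseteq> X)"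
  proof
    show "X \<subseteq> grp n" using T Un_D by blast
    show "\<forall>C\<in>D. \<forall>x\<in>C. x \<in> X \<longrightarrow> C \<subseteq> X"
    proof (intro ballI impI)
      fix C x assume "C \<in> D" "x \<in> C" "x \<in> X"
      then obtain C' where "C' \<in> T" "x \<in> C'" using T by blast
      then have "C = C'" using cls_disj \<open>C \<in> D\<close> \<open>x \<in> C\<close> T(1) by blast
      then show "C \<subseteq> X" using \<open>C' \<in> T\<close> T by blast
    qed
  qed
next
  assume a: "X \<subseteq> grp n \<and> (\<forall>C\<in>D. \<forall>x\<in>C. x \<in> X \<longrightarrow> C \<subseteq> X)"
  have "X = \<Union>{C\<in>D. C \<subseteq> X}"
  proof
    show "X \<subseteq> \<Union>{C\<in>D. C \<subseteq> X}"
    proof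
      fix x assume "x \<in> X"
      have xg: "x \<in> grp n" using a \<open>x \<in> X\<close> by (elim conjE) (rule subsetD)
      obtain C where C: "C \<in> D" "x \<in> C" using ex_cls[OF xg] by (elim bexE)
      have "\<forall>C\<in>D. \<forall>x\<in>C. x \<in> X \<longrightarrow> C \<subseteq> X" using a by (rule conjunct2)
      then have "C \<subseteq> X" using C \<open>x \<in> X\<close> by blast
      then show "x \<in> \<Union>{C\<in>D. C \<subseteq> X}" using C by (intro UnionI[of C]) auto
    qed
  qed blast
  moreover have "{C\<in>D. C \<subseteq> X} \<subseteq> D" by (rule Collect_subset)
  ultimately show "S_subset D X" unfolding S_subset_def by (intro exI[where x="{C\<in>D. C \<subseteq> X}"] conjI)
qed

lemma Ssub_grp: "S_subset D X \<Longrightarrow> X \<subseteq> grp n" using Ssub_iff by blast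

lemma Ssub_cls: "S_subset D X \<Longrightarrow> C \<in> D \<Longrightarrow> x \<in> C \<Longrightarrow> x \<in> X \<Longrightarrow> C \<subseteq> X"
  using Ssub_iff by blast

lemma Ssub_level: "cc D f \<Longrightarrow> S_subset D {g\<in>grp n. P (f g)}"
  unfolding Ssub_iff
proof (intro conjI ballI impI subsetI)
  fix C x y assume "cc D f" "C \<in> D" "x \<in> C" "x \<in> {g\<in>grp n. P (f g)}" "y \<in> C"
  from \<open>cc D f\<close> have "\<forall>C\<in>D. \<forall>x\<in>C. \<forall>y\<in>C. f x = f y" unfolding cc_def .
  then have "\<forall>x\<in>C. \<forall>y\<in>C. f x = f y" using \<open>C \<in> D\<close> by (rule bspec)
  then have "f y = f x" using \<open>x \<in> C\<close> \<open>y \<in> C\<close> by blast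
  moreover have "y \<in> grp n" using cls_grp[OF \<open>C \<in> D\<close>] \<open>y \<in> C\<close> by (rule subsetD)
  ultimately show "y \<in> {g\<in>grp n. P (f g)}" using \<open>x \<in> {g\<in>grp n. P (f g)}\<close> by simp
qed auto

lemma Ssub_Int: "S_subset D X \<Longrightarrow> S_subset D Y \<Longrightarrow> S_subset D (X \<inter> Y)"
  unfolding Ssub_iff by (intro conjI ballI impI; elim conjE; fastforce)

lemma Ssub_Union: "(\<And>X. X \<in> XX \<Longrightarrow> S_subset D X) \<Longrightarrow> S_subset D (\<Union>XX)"
  unfolding Ssub_iff by blast

lemma Ssub_cls_self: "C \<in> D \<Longrightarrow> S_subset D C"
  unfolding S_subset_def by (rule exI[of _ "{C}"]) auto

lemma Ssub_inv: "S_subset D X \<Longrightarrow> S_subset D (ginv n ` X)"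
proof -
  assume "S_subset D X"
  then obtain T where T: "T \<subseteq> D" "X = \<Union>T" unfolding S_subset_def by blast
  have "ginv n ` X = \<Union>((\<lambda>C. ginv n ` C) ` T)" using T by auto
  moreover have "(\<lambda>C. ginv n ` C) ` T \<subseteq> D" using T inv_cls by blast
  ultimately show ?thesis unfolding S_subset_def by blast
qed

lemma cc_ind: "S_subset D X \<Longrightarrow> cc D (\<lambda>g. if g \<in> X then (1::nat) else 0)"
  unfolding cc_def
proof (intro ballI)
  fix C x y assume a: "S_subset D X" "C \<in> D" "x \<in> C" "y \<in> C"
  have "x \<in> X \<longleftrightarrow> y \<in> X"
  proof
    assume "x \<in> X" then have "C \<subseteq> X" using Ssub_cls a by blast
    then show "y \<in> X" using a by blast
  next
    assume "y \<in> X" then have "C \<subseteq> X" using Ssub_cls a by blast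
    then show "x \<in> X" using a by blast
  qed
  then show "(if x \<in> X then (1::nat) else 0) = (if y \<in> X then 1 else 0)" by simp
qed

lemma cls_sub_Ssub: "C \<in> D \<Longrightarrow> S_subset D X \<Longrightarrow> C \<subseteq> X \<or> C \<inter> X = {}"
  using Ssub_cls by blast

definition cover :: "(int \<times> int) set \<Rightarrow> (int \<times> int) set set" where
  "cover P = {C\<in>D. C \<inter> P \<noteq> {}}"

lemma cover_fin: assumes "finite P" shows "finite (cover P)"
proof -
  define cl where "cl u = (SOME C. C \<in> D \<and> u \<in> C)" for u
  have "cover P \<subseteq> cl ` P"
  proof
    fix C assume "C \<in> cover P"
    then obtain u where u: "C \<in> D" "u \<in> C" "u \<in> P" unfolding cover_def by blast
    then have "cl u \<in> D \<and> u \<in> cl u" unfolding cl_def by (metis (mono_tags, lifting) someI)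
    then have "cl u = C" using cls_disj u by blast
    then show "C \<in> cl ` P" using u by blast
  qed
  then show ?thesis using assms finite_subset by blast
qed

lemma cover_sub: "cover P \<subseteq> D" unfolding cover_def by blast
lemma cover_covers: "P \<subseteq> grp n \<Longrightarrow> P \<subseteq> \<Union>(cover P)"
  unfolding cover_def using ex_cls by blast
lemma cover_Ufin: "finite P \<Longrightarrow> finite (\<Union>(cover P))"
  using cover_fin cover_sub cls_fin by blast

lemma base_cc:
  assumes C: "C \<in> D" and C': "C' \<in> D"
  shows "cc D (\<lambda>g. card {(x,u). x\<in>C \<and> u\<in>C' \<and> gmul n x u = g})"
proof -
  obtain T c where Tc: "finite T" "T \<subseteq> D"
    "gconv n (csum F C) (csum F C') = (\<lambda>g. \<Sum>E\<in>T. (c E :: 'f) * csum F E g)"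
    using prod_ax[OF C C'] by blast
  have eq: "(of_nat (card {(x,u). x\<in>C \<and> u\<in>C' \<and> gmul n x u = g}) :: 'f) = (\<Sum>E\<in>T. c E * csum F E g)" for g
  proof -
    have "gconv n (csum F C) (csum F C') g =
       (\<Sum>p\<in>{(u, v). u \<in> grp n \<and> v \<in> grp n \<and> csum F C u \<noteq> 0 \<and> csum F C' v \<noteq> 0 \<and> gmul n u v = g}.
           csum F C (fst p) * csum F C' (snd p))" unfolding gconv_def by simp
    also have "{(u, v). u \<in> grp n \<and> v \<in> grp n \<and> csum F C u \<noteq> (0::'f) \<and> csum F C' v \<noteq> 0 \<and> gmul n u v = g}
       = {(x,u). x\<in>C \<and> u\<in>C' \<and> gmul n x u = g}"
      using cls_grp[OF C] cls_grp[OF C'] unfolding csum_def by auto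
    also have "(\<Sum>p\<in>{(x,u). x\<in>C \<and> u\<in>C' \<and> gmul n x u = g}. csum F C (fst p) * csum F C' (snd p))
        = (\<Sum>p\<in>{(x,u). x\<in>C \<and> u\<in>C' \<and> gmul n x u = g}. (1::'f))"
      by (rule sum.cong) (auto simp: csum_def)
    finally show ?thesis using Tc(3) by simp
  qed
  show ?thesis unfolding cc_def
  proof (intro ballI)
    fix E x y assume E: "E \<in> D" "x \<in> E" "y \<in> E"
    have "(\<Sum>E'\<in>T. c E' * csum F E' x) = (\<Sum>E'\<in>T. c E' * csum F E' y)"
    proof (rule sum.cong)
      fix E' assume "E' \<in> T"
      then have "E' \<in> D" using Tc by blast
      then have "x \<in> E' \<longleftrightarrow> y \<in> E'" using cls_disj E by blast
      then show "c E' * csum F E' x = c E' * csum F E' y" unfolding csum_def by simp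
    qed simp
    then have "(of_nat (card {(x',u). x'\<in>C \<and> u\<in>C' \<and> gmul n x' u = x}) :: 'f)
       = of_nat (card {(x',u). x'\<in>C \<and> u\<in>C' \<and> gmul n x' u = y})" using eq by simp
    then show "card {(x',u). x'\<in>C \<and> u\<in>C' \<and> gmul n x' u = x} = card {(x',u). x'\<in>C \<and> u\<in>C' \<and> gmul n x' u = y}"
      by simp
  qed
qed

lemma sum_cover:
  assumes "finite P" "P \<subseteq> grp n" "\<And>u. u \<notin> P \<Longrightarrow> h u = (0::nat)"
  shows "(\<Sum>u\<in>P. h u) = (\<Sum>C\<in>cover P. \<Sum>u\<in>C. h u)"
proof -
  have "(\<Sum>u\<in>P. h u) = (\<Sum>u\<in>\<Union>(cover P). h u)"
    by (rule sum.mono_neutral_left) (use assms cover_Ufin cover_covers in auto)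
  also have "\<dots> = (\<Sum>C\<in>cover P. \<Sum>u\<in>C. h u)"
    by (rule sum.Union_disjoint[simplified])
       (use cover_sub cls_fin cls_disj in blast)+
  finally show ?thesis .
qed

lemma conv_cc:
  assumes P: "finite P" "P \<subseteq> grp n" "\<And>u. u \<notin> P \<Longrightarrow> \<phi> u = 0" "cc D \<phi>"
      and Q: "finite Q" "Q \<subseteq> grp n" "\<And>u. u \<notin> Q \<Longrightarrow> \<chi> u = 0" "cc D \<chi>"
  shows "cc D (\<lambda>g. \<Sum>x\<in>Q. \<Sum>u\<in>P. if gmul n x u = g then \<chi> x * \<phi> u else (0::nat))"
proof -
  have rep: "(\<Sum>x\<in>Q. \<Sum>u\<in>P. if gmul n x u = g then \<chi> x * \<phi> u else (0::nat))
     = (\<Sum>C\<in>cover Q. \<Sum>C'\<in>cover P. \<Sum>x\<in>C. \<Sum>u\<in>C'. if gmul n x u = g then \<chi> x * \<phi> u else 0)" for g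
  proof -
    have "(\<Sum>x\<in>Q. \<Sum>u\<in>P. if gmul n x u = g then \<chi> x * \<phi> u else (0::nat))
       = (\<Sum>C\<in>cover Q. \<Sum>x\<in>C. \<Sum>u\<in>P. if gmul n x u = g then \<chi> x * \<phi> u else (0::nat))"
    proof (rule sum_cover)
      fix x assume "x \<notin> Q"
      then have "\<chi> x = 0" by (rule Q(3))
      then show "(\<Sum>u\<in>P. if gmul n x u = g then \<chi> x * \<phi> u else (0::nat)) = 0" by (simp cong: if_cong)
    qed (simp_all add: Q(1,2))
    also have "\<dots> = (\<Sum>C\<in>cover Q. \<Sum>x\<in>C. \<Sum>C'\<in>cover P. \<Sum>u\<in>C'. if gmul n x u = g then \<chi> x * \<phi> u else (0::nat))"
    proof (intro sum.cong refl sum_cover)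
      fix x u assume "u \<notin> P"
      then have "\<phi> u = 0" by (rule P(3))
      then show "(if gmul n x u = g then \<chi> x * \<phi> u else (0::nat)) = 0" by (simp cong: if_cong)
    qed (simp_all add: P(1,2))
    also have "\<dots> = (\<Sum>C\<in>cover Q. \<Sum>C'\<in>cover P. \<Sum>x\<in>C. \<Sum>u\<in>C'. if gmul n x u = g then \<chi> x * \<phi> u else 0)"
      by (intro sum.cong refl sum.swap)
    finally show ?thesis .
  qed
  have blk: "(\<Sum>x\<in>C. \<Sum>u\<in>C'. if gmul n x u = g then \<chi> x * \<phi> u else 0)
      = \<chi> (SOME x. x \<in> C) * \<phi> (SOME u. u \<in> C') * card {(x,u). x\<in>C \<and> u\<in>C' \<and> gmul n x u = g}"
    if "C \<in> D" "C' \<in> D" for C C' g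
  proof -
    have "\<chi> x = \<chi> (SOME x. x \<in> C)" if "x \<in> C" for x
      using \<open>C \<in> D\<close> \<open>x \<in> C\<close> Q(4) unfolding cc_def by (metis someI)
    moreover have "\<phi> u = \<phi> (SOME u. u \<in> C')" if "u \<in> C'" for u
      using \<open>C' \<in> D\<close> \<open>u \<in> C'\<close> P(4) unfolding cc_def by (metis someI)
    ultimately have "(\<Sum>x\<in>C. \<Sum>u\<in>C'. if gmul n x u = g then \<chi> x * \<phi> u else 0)
       = (\<Sum>x\<in>C. \<Sum>u\<in>C'. if gmul n x u = g then \<chi> (SOME x. x \<in> C) * \<phi> (SOME u. u \<in> C') else 0)"
      by (intro sum.cong refl) auto
    also have "\<dots> = \<chi> (SOME x. x \<in> C) * \<phi> (SOME u. u \<in> C') * card {(x,u). x\<in>C \<and> u\<in>C' \<and> gmul n x u = g}"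
      by (rule sum_if_card) (use that cls_fin in auto)
    finally show ?thesis .
  qed
  have eqg: "(\<Sum>x\<in>Q. \<Sum>u\<in>P. if gmul n x u = g then \<chi> x * \<phi> u else (0::nat))
     = (\<Sum>C\<in>cover Q. \<Sum>C'\<in>cover P. \<chi> (SOME x. x \<in> C) * \<phi> (SOME u. u \<in> C') * card {(x,u). x\<in>C \<and> u\<in>C' \<and> gmul n x u = g})" for g
    unfolding rep
  proof (intro sum.cong refl)
    fix C C' assume "C \<in> cover Q" "C' \<in> cover P"
    then have CD: "C \<in> D" "C' \<in> D" using cover_sub by auto
    show "(\<Sum>x\<in>C. \<Sum>u\<in>C'. if gmul n x u = g then \<chi> x * \<phi> u else 0) =
      \<chi> (SOME x. x \<in> C) * \<phi> (SOME u. u \<in> C') * card {(x,u). x\<in>C \<and> u\<in>C' \<and> gmul n x u = g}"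
      by (rule blk[OF CD])
  qed
  show ?thesis unfolding cc_def
  proof (intro ballI)
    fix E a b assume E: "E \<in> D" "a \<in> E" "b \<in> E"
    show "(\<Sum>x\<in>Q. \<Sum>u\<in>P. if gmul n x u = a then \<chi> x * \<phi> u else 0) =
          (\<Sum>x\<in>Q. \<Sum>u\<in>P. if gmul n x u = b then \<chi> x * \<phi> u else 0)"
      unfolding eqg
    proof (intro sum.cong refl)
      fix C C' assume "C \<in> cover Q" "C' \<in> cover P"
      then have CD: "C \<in> D" "C' \<in> D" using cover_sub by auto
      have "cc D (\<lambda>g. card {(x,u). x\<in>C \<and> u\<in>C' \<and> gmul n x u = g})" by (rule base_cc[OF CD])
      then have "\<forall>a\<in>E. \<forall>b\<in>E. card {(x,u). x\<in>C \<and> u\<in>C' \<and> gmul n x u = a} = card {(x,u). x\<in>C \<and> u\<in>C' \<and> gmul n x u = b}"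
        using E(1) unfolding cc_def by (rule bspec)
      then have "card {(x,u). x\<in>C \<and> u\<in>C' \<and> gmul n x u = a} = card {(x,u). x\<in>C \<and> u\<in>C' \<and> gmul n x u = b}"
        using E(2,3) by blast
      then show "\<chi> (SOME x. x \<in> C) * \<phi> (SOME u. u \<in> C') * card {(x,u). x\<in>C \<and> u\<in>C' \<and> gmul n x u = a} =
                 \<chi> (SOME x. x \<in> C) * \<phi> (SOME u. u \<in> C') * card {(x,u). x\<in>C \<and> u\<in>C' \<and> gmul n x u = b}"
        by simp
    qed
  qed
qed

end

definition lprod :: "nat \<Rightarrow> (int \<times> int) list \<Rightarrow> int \<times> int" where
  "lprod n xs = (sum_list (map fst xs), sum_list (map snd xs) mod int n)"

definition gpow :: "nat \<Rightarrow> nat \<Rightarrow> int \<times> int \<Rightarrow> int \<times> int" where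
  "gpow n r x = (int r * fst x, (int r * snd x) mod int n)"

definition cnt :: "nat \<Rightarrow> (int \<times> int) set \<Rightarrow> nat \<Rightarrow> int \<times> int \<Rightarrow> nat" where
  "cnt n X k g = card {xs. set xs \<subseteq> X \<and> length xs = k \<and> lprod n xs = g}"

lemma lprod_Nil: "lprod n [] = gone" by (simp add: lprod_def gone_def)

lemma lprod_Cons: "lprod n (x # xs) = gmul n x (lprod n xs)"
  by (simp add: lprod_def gmul_def mod_add_right_eq)

lemma lprod_append: "lprod n (xs @ ys) = gmul n (lprod n xs) (lprod n ys)"
  by (simp add: lprod_def gmul_def mod_add_eq)

lemma lprod_rotate1: "lprod n (rotate1 xs) = lprod n xs"
  by (cases xs) (simp_all add: lprod_def algebra_simps)

lemma lprod_replicate: "lprod n (replicate p x) = gpow n p x"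
  by (simp add: lprod_def gpow_def sum_list_replicate)

lemma ginv_gmul: "ginv n (gmul n x y) = gmul n (ginv n x) (ginv n y)"
  by (simp add: ginv_def gmul_def mod_minus_eq mod_add_eq)

lemma lprod_map_inv: "lprod n (map (ginv n) xs) = ginv n (lprod n xs)"
  by (induction xs) (simp_all add: lprod_Nil lprod_Cons ginv_gmul, simp add: ginv_def gone_def)

lemma gmul_assoc: "gmul n (gmul n x y) z = gmul n x (gmul n y z)"
  by (simp add: gmul_def mod_add_eq mod_add_left_eq mod_add_right_eq add.assoc)

lemma gmul_comm: "gmul n x y = gmul n y x"
  by (simp add: gmul_def add.commute)

lemma grp_iff: "x \<in> grp n \<longleftrightarrow> 0 \<le> snd x \<and> snd x < int n"
  by (cases x) (auto simp: grp_def)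

lemma gmul_grp: "n \<ge> 1 \<Longrightarrow> gmul n x y \<in> grp n"
  by (simp add: grp_iff gmul_def)

lemma ginv_grp: "n \<ge> 1 \<Longrightarrow> ginv n x \<in> grp n"
  by (simp add: grp_iff ginv_def)

lemma gpow_grp: "n \<ge> 1 \<Longrightarrow> gpow n r x \<in> grp n"
  by (simp add: grp_iff gpow_def)

lemma lprod_grp: "n \<ge> 1 \<Longrightarrow> lprod n xs \<in> grp n"
  by (simp add: grp_iff lprod_def)

lemma gone_grp: "n \<ge> 1 \<Longrightarrow> gone \<in> grp n"
  by (simp add: grp_iff gone_def)

lemma gmul_one: "x \<in> grp n \<Longrightarrow> gmul n gone x = x"
  by (cases x) (simp add: grp_iff gmul_def gone_def)

lemma gmul_one2: "x \<in> grp n \<Longrightarrow> gmul n x gone = x"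
  by (cases x) (simp add: grp_iff gmul_def gone_def)

lemma gmul_inv: "gmul n x (ginv n x) = gone"
  by (simp add: gmul_def ginv_def gone_def mod_add_right_eq)

lemma ginv_ginv: "x \<in> grp n \<Longrightarrow> ginv n (ginv n x) = x"
  by (cases x) (simp add: grp_iff ginv_def mod_minus_eq)

lemma gpow_mult: "gpow n (a * b) x = gpow n a (gpow n b x)"
  by (simp add: gpow_def mod_mult_right_eq mult.assoc)

lemma gpow_1: "x \<in> grp n \<Longrightarrow> gpow n 1 x = x"
  by (cases x) (simp add: grp_iff gpow_def)

lemma gpow_inj:
  assumes "coprime r n" "x \<in> grp n" "y \<in> grp n" "gpow n r x = gpow n r y" "r \<ge> 1"
  shows "x = y"
proof -
  have f: "fst x = fst y" using assms(4,5) by (simp add: gpow_def)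
  have "(int r * snd x) mod int n = (int r * snd y) mod int n" using assms(4) by (simp add: gpow_def)
  then have "int n dvd int r * snd x - int r * snd y" by (simp only: mod_eq_dvd_iff)
  then have "int n dvd int r * (snd x - snd y)" by (simp only: right_diff_distrib)
  moreover have "coprime (int n) (int r)" using assms(1) coprime_commute by (metis coprime_int_iff)
  ultimately have "int n dvd (snd x - snd y)" using coprime_dvd_mult_right_iff by blast
  then have "snd x mod int n = snd y mod int n" by (simp only: mod_eq_dvd_iff)
  moreover have "0 \<le> snd x" "snd x < int n" "0 \<le> snd y" "snd y < int n" using assms(2,3) by (auto simp: grp_iff)
  ultimately have "snd x = snd y" by simp
  then show ?thesis using f by (simp add: prod_eq_iff)
qed

definition lstn :: "(int \<times> int) set \<Rightarrow> nat \<Rightarrow> (int \<times> int) list set" where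
  "lstn X k = {xs. set xs \<subseteq> X \<and> length xs = k}"

lemma lstn_fin: "finite X \<Longrightarrow> finite (lstn X k)"
  unfolding lstn_def by (rule finite_lists_length_eq)

lemma cnt_sum: "finite X \<Longrightarrow> cnt n X k g = (\<Sum>xs\<in>lstn X k. if lprod n xs = g then 1 else 0)"
proof -
  assume fin: "finite X"
  have "cnt n X k g = card {xs\<in>lstn X k. lprod n xs = g}" unfolding cnt_def lstn_def by (rule arg_cong[where f=card]) auto
  also have "\<dots> = (\<Sum>xs\<in>{xs\<in>lstn X k. lprod n xs = g}. 1)" by simp
  also have "\<dots> = (\<Sum>xs\<in>lstn X k. if lprod n xs = g then 1 else 0)"
    by (rule sum.inter_filter[OF lstn_fin[OF fin]])
  finally show ?thesis .
qed

lemma cnt_Suc: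
  assumes fin: "finite X"
  shows "cnt n X (Suc k) g = (\<Sum>x\<in>X. \<Sum>u\<in>lprod n ` lstn X k.
     if gmul n x u = g then (if x \<in> X then 1 else 0) * cnt n X k u else 0)"
proof -
  have L: "lstn X (Suc k) = (\<lambda>(xs, x). x # xs) ` (lstn X k \<times> X)"
    unfolding lstn_def by (rule lists_length_Suc_eq)
  have inj: "inj_on (\<lambda>(xs, x). x # xs) (lstn X k \<times> X)" by (auto simp: inj_on_def)
  have "cnt n X (Suc k) g = (\<Sum>xs\<in>lstn X (Suc k). if lprod n xs = g then 1 else 0)"
    by (rule cnt_sum[OF fin])
  also have "\<dots> = (\<Sum>p\<in>lstn X k \<times> X. if lprod n (snd p # fst p) = g then 1 else 0)"
    unfolding L by (subst sum.reindex[OF inj]) (simp add: case_prod_beta)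
  also have "\<dots> = (\<Sum>(ys,x)\<in>lstn X k \<times> X. if gmul n x (lprod n ys) = g then 1 else 0)"
    by (intro sum.cong refl) (auto simp: lprod_Cons)
  also have "\<dots> = (\<Sum>ys\<in>lstn X k. \<Sum>x\<in>X. if gmul n x (lprod n ys) = g then 1 else 0)"
    by (rule sum.cartesian_product[symmetric])
  also have "\<dots> = (\<Sum>x\<in>X. \<Sum>ys\<in>lstn X k. if gmul n x (lprod n ys) = g then 1 else 0)"
    by (rule sum.swap)
  also have "\<dots> = (\<Sum>x\<in>X. \<Sum>u\<in>lprod n ` lstn X k.
     if gmul n x u = g then (if x \<in> X then 1 else 0) * cnt n X k u else 0)"
  proof (rule sum.cong[OF refl])
    fix x assume "x \<in> X"
    have "(\<Sum>ys\<in>lstn X k. if gmul n x (lprod n ys) = g then 1 else 0)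
       = (\<Sum>u\<in>lprod n ` lstn X k. \<Sum>ys\<in>{ys. ys \<in> lstn X k \<and> lprod n ys = u}. if gmul n x (lprod n ys) = g then 1 else 0)"
      by (rule sum.image_gen[OF lstn_fin[OF fin]])
    also have "\<dots> = (\<Sum>u\<in>lprod n ` lstn X k. if gmul n x u = g then cnt n X k u else 0)"
    proof (rule sum.cong[OF refl])
      fix u
      have set_eq: "{ys. ys \<in> lstn X k \<and> lprod n ys = u} = {xs. set xs \<subseteq> X \<and> length xs = k \<and> lprod n xs = u}"
        unfolding lstn_def by auto
      have "(\<Sum>ys\<in>{ys. ys \<in> lstn X k \<and> lprod n ys = u}. if gmul n x (lprod n ys) = g then 1 else 0)
          = (\<Sum>ys\<in>{ys. ys \<in> lstn X k \<and> lprod n ys = u}. if gmul n x u = g then 1 else 0)"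
        by (rule sum.cong) auto
      also have "\<dots> = (if gmul n x u = g then cnt n X k u else 0)"
        unfolding cnt_def set_eq[symmetric] by simp
      finally show "(\<Sum>ys\<in>{ys. ys \<in> lstn X k \<and> lprod n ys = u}. if gmul n x (lprod n ys) = g then 1 else 0)
          = (if gmul n x u = g then cnt n X k u else 0)" .
    qed
    finally show "(\<Sum>ys\<in>lstn X k. if gmul n x (lprod n ys) = g then 1 else 0) =
      (\<Sum>u\<in>lprod n ` lstn X k. if gmul n x u = g then (if x \<in> X then 1 else 0) * cnt n X k u else 0)"
      using \<open>x \<in> X\<close> by (simp cong: if_cong)
  qed
  finally show ?thesis .
qed

lemma cnt_0: "cnt n X 0 g = (if g = gone then 1 else 0)"
proof -
  have "{xs. set xs \<subseteq> X \<and> length xs = 0 \<and> lprod n xs = g} = (if g = gone then {[]} else {})"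
    by (auto simp: lprod_Nil)
  then show ?thesis unfolding cnt_def by simp
qed

context SR
begin

lemma cc_cnt:
  assumes fin: "finite X" and XS: "S_subset D X"
  shows "cc D (cnt n X k)"
proof (induction k)
  case 0
  show ?case unfolding cc_def
  proof (intro ballI)
    fix E x y assume E: "E \<in> D" "x \<in> E" "y \<in> E"
    have "x = gone \<longleftrightarrow> y = gone"
    proof
      assume "x = gone" then have "E = {gone}" using cls_disj[OF E(1) one_cls E(2)] by simp
      then show "y = gone" using E by simp
    next
      assume "y = gone" then have "E = {gone}" using cls_disj[OF E(1) one_cls E(3)] by simp
      then show "x = gone" using E by simp
    qed
    then show "cnt n X 0 x = cnt n X 0 y" by (simp only: cnt_0)
  qed
next
  case (Suc k)
  have Xg: "X \<subseteq> grp n" using Ssub_grp[OF XS] .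
  have c: "cc D (\<lambda>g. \<Sum>x\<in>X. \<Sum>u\<in>lprod n ` lstn X k.
     if gmul n x u = g then (if x \<in> X then 1 else 0) * cnt n X k u else (0::nat))"
  proof (rule conv_cc[where Q=X and P="lprod n ` lstn X k" and \<chi>="\<lambda>u. if u \<in> X then 1 else 0" and \<phi>="cnt n X k"])
    show "finite (lprod n ` lstn X k)" using lstn_fin[OF fin] by simp
    show "lprod n ` lstn X k \<subseteq> grp n" using lprod_grp npos by auto
    show "cnt n X k u = 0" if "u \<notin> lprod n ` lstn X k" for u
    proof -
      have "{xs. set xs \<subseteq> X \<and> length xs = k \<and> lprod n xs = u} = {}"
        using that unfolding lstn_def by blast
      then show ?thesis unfolding cnt_def by (simp only: card.empty)
    qed
    show "cc D (cnt n X k)" by (rule Suc)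
    show "finite X" by (rule fin)
    show "X \<subseteq> grp n" by (rule Xg)
    show "(if u \<in> X then 1 else 0) = (0::nat)" if "u \<notin> X" for u using that by simp
    show "cc D (\<lambda>u. if u \<in> X then 1 else (0::nat))" by (rule cc_ind[OF XS])
  qed
  have eq: "cnt n X (Suc k) = (\<lambda>g. \<Sum>x\<in>X. \<Sum>u\<in>lprod n ` lstn X k.
     if gmul n x u = g then (if x \<in> X then 1 else 0) * cnt n X k u else (0::nat))"
    by (rule ext) (rule cnt_Suc[OF fin])
  show ?case using c by (simp only: eq)
qed

lemma mult_prime:
  assumes p: "prime p" "\<not> p dvd n" and fin: "finite X" and XS: "S_subset D X"
  shows "S_subset D (gpow n p ` X)"
proof -
  have Xg: "X \<subseteq> grp n" using Ssub_grp[OF XS] .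
  have cop: "coprime p n" using p by (simp add: prime_imp_coprime_nat)
  have p1: "p \<ge> 1" using p prime_gt_1_nat by (simp add: Suc_leI prime_gt_0_nat)
  have p2: "p > 1" using p prime_gt_1_nat by blast
  have key: "cnt n X p g mod p = card {x\<in>X. gpow n p x = g} mod p" for g
    unfolding cnt_def
    using necklace[OF fin p(1), of "\<lambda>xs. lprod n xs = g"] by (simp add: lprod_rotate1 lprod_replicate)
  have card1: "card {x\<in>X. gpow n p x = g} = (if g \<in> gpow n p ` X then 1 else 0)" for g
  proof (cases "g \<in> gpow n p ` X")
    case True
    then obtain x0 where x0: "x0 \<in> X" "g = gpow n p x0" by blast
    have "{x\<in>X. gpow n p x = g} = {x0}"
      using x0 gpow_inj[OF cop] Xg p1 by blast
    then show ?thesis using True by simp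
  next
    case False
    then have e: "{x\<in>X. gpow n p x = g} = {}" by blast
    show ?thesis unfolding e using False by simp
  qed
  have "gpow n p ` X = {g\<in>grp n. cnt n X p g mod p \<noteq> 0}"
  proof
    show "gpow n p ` X \<subseteq> {g\<in>grp n. cnt n X p g mod p \<noteq> 0}"
      using key card1 p2 gpow_grp npos by auto
    show "{g\<in>grp n. cnt n X p g mod p \<noteq> 0} \<subseteq> gpow n p ` X"
    proof
      fix g assume "g \<in> {g\<in>grp n. cnt n X p g mod p \<noteq> 0}"
      then have "card {x\<in>X. gpow n p x = g} mod p \<noteq> 0" using key by simp
      then show "g \<in> gpow n p ` X" using card1[of g] by (auto split: if_splits)
    qed
  qed
  then show ?thesis using Ssub_level[OF cc_cnt[OF fin XS, of p]] by simp
qed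

lemma mult_gen:
  assumes "r \<ge> 1" "coprime r n" "finite X" "S_subset D X"
  shows "S_subset D (gpow n r ` X)"
  using assms
proof (induction r arbitrary: X rule: less_induct)
  case (less r)
  show ?case
  proof (cases "r = 1")
    case True
    have "gpow n r ` X = (\<lambda>x. x) ` X"
      by (rule image_cong) (use True gpow_1 Ssub_grp[OF less(5)] in auto)
    then have "gpow n r ` X = X" by simp
    then show ?thesis using less by simp
  next
    case False
    then obtain p where p: "prime p" "p dvd r" using prime_factor_nat by blast
    then obtain r' where r': "r = p * r'" by blast
    have r'1: "r' \<ge> 1" using r' less(2) by (cases r') auto
    have "1 * r' < p * r'" by (rule mult_strict_right_mono) (use r'1 prime_gt_1_nat[OF p(1)] in auto)
    then have r'lt: "r' < r" using r' by simp
    have cop': "coprime r' n" using less(3) r' by simp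
    have copp: "coprime p n" using less(3) r' by simp
    have "\<not> p dvd n"
      using coprime_common_divisor[OF copp dvd_refl] prime_gt_1_nat[OF p(1)] by auto
    have IH: "S_subset D (gpow n r' ` X)" using less(1)[OF r'lt r'1 cop' less(4) less(5)] .
    have "gpow n r ` X = gpow n p ` (gpow n r' ` X)" unfolding r' by (auto simp: gpow_mult image_image)
    then show ?thesis using mult_prime[OF p(1) \<open>\<not> p dvd n\<close> _ IH] less(4) by simp
  qed
qed

end

definition pcnt :: "nat \<Rightarrow> (int \<times> int) set \<Rightarrow> (int \<times> int) set \<Rightarrow> int \<times> int \<Rightarrow> nat" where
  "pcnt n X Y g = card {(x,u). x \<in> X \<and> u \<in> Y \<and> gmul n x u = g}"

definition pairs :: "nat \<Rightarrow> (int \<times> int) set \<Rightarrow> nat \<Rightarrow> nat \<Rightarrow> int \<times> int \<Rightarrow> ((int \<times> int) \<times> (int \<times> int)) set" where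
  "pairs n X r r' g = {(y,x). y \<in> X \<and> x \<in> X \<and> int r * fst y - int r' * fst x = fst g \<and> (snd y - snd x) mod int n = snd g}"

definition near :: "nat \<Rightarrow> (int \<times> int) set \<Rightarrow> int \<times> int \<Rightarrow> nat" where
  "near n X g = card {(y,x). y \<in> X \<and> x \<in> X \<and> fst y = fst x \<and> int n * fst y = fst g \<and> (snd y - snd x) mod int n = snd g}"

lemma cop1: "coprime (1 + n * k) (n::nat)"
proof -
  have "gcd (1 + n * k) n = gcd n (k * n + 1)" by (simp add: gcd.commute mult.commute add.commute)
  also have "\<dots> = 1" using gcd_add_mult[of n k 1] by simp
  finally show ?thesis by (simp add: coprime_iff_gcd_eq_1)
qed

lemma far_lower:
  fixes r n B a b :: int
  assumes "\<bar>a\<bar> \<le> B" "\<bar>b\<bar> \<le> B" "a \<noteq> b" "n \<ge> 0" "r \<ge> 0"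
  shows "\<bar>r*a - (r-n)*b\<bar> \<ge> r - n*B"
proof -
  have e: "r*a - (r-n)*b = r*(a-b) + n*b" by (simp add: algebra_simps)
  have "\<bar>a - b\<bar> \<ge> 1" using assms(3) by simp
  then have "r * 1 \<le> r * \<bar>a - b\<bar>" using assms(5) by (intro mult_left_mono) auto
  then have r1: "\<bar>r*(a-b)\<bar> \<ge> r" using assms(5) by (simp add: abs_mult)
  have "\<bar>n*b\<bar> = n * \<bar>b\<bar>" using assms(4) by (simp add: abs_mult)
  also have "\<dots> \<le> n * B" using assms(2,4) by (intro mult_left_mono) auto
  finally have r2: "\<bar>n*b\<bar> \<le> n * B" .
  have "\<bar>r*(a-b)\<bar> \<le> \<bar>r*(a-b) + n*b\<bar> + \<bar>n*b\<bar>" by (rule abs_triangle_ineq4[of "r*(a-b) + n*b" "n*b", simplified])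
  then show ?thesis unfolding e using r1 r2 by linarith
qed

lemma far_upper:
  fixes r n B a b :: int
  assumes "\<bar>a\<bar> \<le> B" "\<bar>b\<bar> \<le> B" "n \<ge> 0" "r \<ge> n"
  shows "\<bar>r*a - (r-n)*b\<bar> \<le> 2*r*B"
proof -
  have "\<bar>r*a\<bar> = r * \<bar>a\<bar>" using assms by (simp add: abs_mult)
  also have "\<dots> \<le> r * B" using assms by (intro mult_left_mono) auto
  finally have u1: "\<bar>r*a\<bar> \<le> r * B" .
  have "\<bar>(r-n)*b\<bar> = (r-n) * \<bar>b\<bar>" using assms by (simp add: abs_mult)
  also have "\<dots> \<le> (r-n) * B" using assms by (intro mult_left_mono) auto
  also have "\<dots> \<le> r * B"
  proof -
    have "B \<ge> 0" using assms(1) abs_ge_zero[of a] by linarith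
    then have "n * B \<ge> 0" using assms(3) by simp
    moreover have "(r - n) * B = r * B - n * B" by (rule left_diff_distrib)
    ultimately show ?thesis by linarith
  qed
  finally have u2: "\<bar>(r-n)*b\<bar> \<le> r * B" .
  have "\<bar>r*a - (r-n)*b\<bar> \<le> \<bar>r*a\<bar> + \<bar>(r-n)*b\<bar>" by (rule abs_triangle_ineq4)
  then show ?thesis using u1 u2 by linarith
qed

lemma gm_pow:
  assumes "r = 1 + n * (t + 1)" "r' = 1 + n * t"
  shows "gmul n (gpow n r y) (ginv n (gpow n r' x)) = (int r * fst y - int r' * fst x, (snd y - snd x) mod int n)"
proof -
  have "(int r * snd y mod int n + - (int r' * snd x mod int n) mod int n) mod int n
      = (int r * snd y - int r' * snd x) mod int n"
    by (simp add: mod_minus_eq mod_add_eq)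
  also have "int r * snd y - int r' * snd x = (snd y - snd x) + int n * (int (t+1) * snd y - int t * snd x)"
    using assms by (simp add: algebra_simps)
  also have "((snd y - snd x) + int n * (int (t+1) * snd y - int t * snd x)) mod int n = (snd y - snd x) mod int n"
    by simp
  finally show ?thesis by (simp add: gmul_def gpow_def ginv_def)
qed

context SR
begin

lemma cc_pcnt:
  assumes "finite X" "S_subset D X" "finite Y" "S_subset D Y"
  shows "cc D (pcnt n X Y)"
proof -
  have c: "cc D (\<lambda>g. \<Sum>x\<in>X. \<Sum>u\<in>Y. if gmul n x u = g then (if x \<in> X then 1 else 0) * (if u \<in> Y then 1 else 0) else (0::nat))"
    by (rule conv_cc[where Q=X and P=Y]) (use assms Ssub_grp cc_ind in auto)
  have "(\<Sum>x\<in>X. \<Sum>u\<in>Y. if gmul n x u = g then (if x \<in> X then 1 else 0) * (if u \<in> Y then 1 else 0) else (0::nat))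
      = pcnt n X Y g" for g
  proof -
    have "(\<Sum>x\<in>X. \<Sum>u\<in>Y. if gmul n x u = g then (if x \<in> X then 1 else 0) * (if u \<in> Y then 1 else 0) else (0::nat))
       = (\<Sum>x\<in>X. \<Sum>u\<in>Y. if gmul n x u = g then 1 else (0::nat))"
      by (intro sum.cong refl) (auto cong: if_cong)
    also have "\<dots> = 1 * pcnt n X Y g" unfolding pcnt_def by (rule sum_if_card) (use assms in auto)
    finally show ?thesis by simp
  qed
  then show ?thesis using c by simp
qed

lemma Ssub_pcnt:
  assumes "finite X" "S_subset D X" "finite Y" "S_subset D Y"
  shows "S_subset D {g \<in> grp n. pcnt n X Y g \<noteq> 0}"
  by (rule Ssub_level[OF cc_pcnt[OF assms]])

lemma cc_pairs:
  assumes fin: "finite X" and XS: "S_subset D X" and r: "r = 1 + n * (t + 1)" "r' = 1 + n * t"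
  shows "cc D (\<lambda>g. card (pairs n X r r' g))"
proof -
  have Xg: "X \<subseteq> grp n" using Ssub_grp[OF XS] .
  have cop: "coprime r n" "coprime r' n" unfolding r by (rule cop1)+
  have S1: "S_subset D (gpow n r ` X)" by (rule mult_gen) (use r cop fin XS in auto)
  have S2: "S_subset D (ginv n ` gpow n r' ` X)" by (rule Ssub_inv, rule mult_gen) (use r cop fin XS in auto)
  have c: "cc D (pcnt n (gpow n r ` X) (ginv n ` gpow n r' ` X))"
    by (rule cc_pcnt) (use S1 S2 fin in auto)
  have eq: "pcnt n (gpow n r ` X) (ginv n ` gpow n r' ` X) g = card (pairs n X r r' g)" for g
  proof -
    let ?f = "\<lambda>(y,x). (gpow n r y, ginv n (gpow n r' x))"
    have inj: "inj_on ?f (X \<times> X)"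
    proof (rule inj_onI)
      fix p q assume pq: "p \<in> X \<times> X" "q \<in> X \<times> X" "?f p = ?f q"
      have g: "fst p \<in> grp n" "fst q \<in> grp n" "snd p \<in> grp n" "snd q \<in> grp n" using pq Xg by auto
      have r1: "r \<ge> 1" "r' \<ge> 1" using r by auto
      have "gpow n r (fst p) = gpow n r (fst q)" using pq by (auto simp: case_prod_beta)
      then have 1: "fst p = fst q" by (rule gpow_inj[OF cop(1) g(1,2) _ r1(1)])
      have "ginv n (gpow n r' (snd p)) = ginv n (gpow n r' (snd q))" using pq by (auto simp: case_prod_beta)
      then have "ginv n (ginv n (gpow n r' (snd p))) = ginv n (ginv n (gpow n r' (snd q)))" by simp
      then have "gpow n r' (snd p) = gpow n r' (snd q)" using ginv_ginv gpow_grp npos by simp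
      then have 2: "snd p = snd q" by (rule gpow_inj[OF cop(2) g(3,4) _ r1(2)])
      show "p = q" using 1 2 by (simp add: prod_eq_iff)
    qed
    have "{(x,u). x \<in> gpow n r ` X \<and> u \<in> ginv n ` gpow n r' ` X \<and> gmul n x u = g} = ?f ` pairs n X r r' g"
    proof
      show "{(x,u). x \<in> gpow n r ` X \<and> u \<in> ginv n ` gpow n r' ` X \<and> gmul n x u = g} \<subseteq> ?f ` pairs n X r r' g"
      proof
        fix p assume "p \<in> {(x,u). x \<in> gpow n r ` X \<and> u \<in> ginv n ` gpow n r' ` X \<and> gmul n x u = g}"
        then obtain y x where yx: "y \<in> X" "x \<in> X" "p = (gpow n r y, ginv n (gpow n r' x))"
            "gmul n (gpow n r y) (ginv n (gpow n r' x)) = g" by auto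
        then have "(y,x) \<in> pairs n X r r' g" unfolding pairs_def using gm_pow[OF r] by auto
        then show "p \<in> ?f ` pairs n X r r' g" using yx by force
      qed
      show "?f ` pairs n X r r' g \<subseteq> {(x,u). x \<in> gpow n r ` X \<and> u \<in> ginv n ` gpow n r' ` X \<and> gmul n x u = g}"
        unfolding pairs_def using gm_pow[OF r] by (auto simp: prod_eq_iff)
    qed
    moreover have "inj_on ?f (pairs n X r r' g)" by (rule inj_on_subset[OF inj]) (auto simp: pairs_def)
    ultimately show ?thesis unfolding pcnt_def by (simp add: card_image)
  qed
  show ?thesis using c unfolding eq[symmetric] by simp
qed

end

lemma abs_bound_sum: fixes X :: "(int \<times> int) set" shows "finite X \<Longrightarrow> x \<in> X \<Longrightarrow> \<bar>fst x\<bar> \<le> (\<Sum>c\<in>X. \<bar>fst c\<bar>)"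
  using member_le_sum[of x X "\<lambda>c. \<bar>fst c\<bar>"] by simp

context SR
begin

lemma near_Ssub:
  assumes fin: "finite X" and XS: "S_subset D X" and v: "v \<ge> 1"
  shows "S_subset D {g \<in> grp n. near n X g = v}"
proof -
  define B :: int where "B = (\<Sum>c\<in>X. \<bar>fst c\<bar>)"
  have Bx: "\<bar>fst x\<bar> \<le> B" if "x \<in> X" for x unfolding B_def by (rule abs_bound_sum[OF fin that])
  have B0: "B \<ge> 0" unfolding B_def by (rule sum_nonneg) simp
  define N where "N = int n"
  have N1: "N \<ge> 1" using npos unfolding N_def by simp
  define t1 :: nat where "t1 = 2 * nat B"
  define r1 :: nat where "r1 = 1 + n * (t1 + 1)"
  define r1' :: nat where "r1' = 1 + n * t1"
  define t2 :: nat where "t2 = 2 * r1 * nat B + n * nat B"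
  define r2 :: nat where "r2 = 1 + n * (t2 + 1)"
  define r2' :: nat where "r2' = 1 + n * t2"
  have d1: "int r1 - int r1' = N" unfolding r1_def r1'_def N_def by (simp add: algebra_simps)
  have d2: "int r2 - int r2' = N" unfolding r2_def r2'_def N_def by (simp add: algebra_simps)
  have i1: "int r1 = 1 + N * (2 * B + 1)" unfolding r1_def t1_def N_def using B0 by (simp add: algebra_simps)
  have big1: "int r1 > 2 * N * B" using i1 N1 B0 by (simp add: algebra_simps)
  have rN1: "int r1 \<ge> N" using i1 N1 B0 by (simp add: algebra_simps)
  have it2: "int t2 = 2 * int r1 * B + N * B" unfolding t2_def N_def using B0 by simp
  have e2: "int r2 = 1 + N * (int t2 + 1)" unfolding r2_def N_def by (simp add: algebra_simps)
  have q1: "(N - 1) * (int t2 + 1) \<ge> 0" using N1 by simp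
  have q2: "N * (int t2 + 1) = (int t2 + 1) + (N - 1) * (int t2 + 1)" by (simp add: algebra_simps)
  have r2ge: "int r2 \<ge> 2 + int t2" using e2 q1 q2 by linarith
  have big2: "int r2 - N * B > 2 * int r1 * B" using r2ge it2 by simp
  have "2 * int r1 * B \<ge> 2 * N * B" using rN1 B0 by (simp add: mult_right_mono)
  moreover have "N * B \<ge> 0" using N1 B0 by simp
  ultimately have big2': "int r2 > 2 * N * B" using r2ge it2 by linarith
  have "N * int t2 \<ge> 0" using N1 by simp
  moreover have "int r2 = 1 + N + N * int t2" using e2 by (simp add: algebra_simps)
  ultimately have rN2: "int r2 \<ge> N" by linarith
  have key_near: "card (pairs n X r r' g) = near n X g"
    if g: "\<bar>fst g\<bar> \<le> N * B" and rr: "int r - int r' = N" "int r > 2 * N * B" for r r' g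
  proof -
    have "pairs n X r r' g = {(y,x). y \<in> X \<and> x \<in> X \<and> fst y = fst x \<and> int n * fst y = fst g \<and> (snd y - snd x) mod int n = snd g}"
    proof (intro set_eqI iffI)
      fix p assume p: "p \<in> pairs n X r r' g"
      obtain y x where yx: "p = (y,x)" by (cases p)
      have h: "y \<in> X" "x \<in> X" "int r * fst y - int r' * fst x = fst g" "(snd y - snd x) mod int n = snd g"
        using p unfolding yx pairs_def by auto
      have r': "int r' = int r - N" using rr by simp
      have "fst y = fst x"
      proof (rule ccontr)
        assume ne: "fst y \<noteq> fst x"
        have "\<bar>int r * fst y - (int r - N) * fst x\<bar> \<ge> int r - N * B"
          by (rule far_lower) (use Bx h ne N1 rr B0 in auto)
        then have "\<bar>fst g\<bar> \<ge> int r - N * B" using h(3) r' by simp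
        then show False using g rr by linarith
      qed
      moreover have "int n * fst y = fst g" using h(3) r' \<open>fst y = fst x\<close> N_def by (simp add: algebra_simps)
      ultimately show "p \<in> {(y,x). y \<in> X \<and> x \<in> X \<and> fst y = fst x \<and> int n * fst y = fst g \<and> (snd y - snd x) mod int n = snd g}"
        using h yx by auto
    next
      fix p assume p: "p \<in> {(y,x). y \<in> X \<and> x \<in> X \<and> fst y = fst x \<and> int n * fst y = fst g \<and> (snd y - snd x) mod int n = snd g}"
      obtain y x where yx: "p = (y,x)" by (cases p)
      have h: "y \<in> X" "x \<in> X" "fst y = fst x" "int n * fst y = fst g" "(snd y - snd x) mod int n = snd g"
        using p unfolding yx by auto
      have "int r * fst y - int r' * fst x = (int r - int r') * fst y" using h(3) by (simp add: algebra_simps)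
      also have "\<dots> = fst g" using rr h(4) N_def by simp
      finally show "p \<in> pairs n X r r' g" unfolding yx pairs_def using h by auto
    qed
    then show ?thesis unfolding near_def by (rule arg_cong)
  qed
  have near0: "near n X g = 0" if g: "\<bar>fst g\<bar> > N * B" for g
  proof -
    have "{(y,x). y \<in> X \<and> x \<in> X \<and> fst y = fst x \<and> int n * fst y = fst g \<and> (snd y - snd x) mod int n = snd g} = {}"
    proof (rule ccontr)
      assume "{(y,x). y \<in> X \<and> x \<in> X \<and> fst y = fst x \<and> int n * fst y = fst g \<and> (snd y - snd x) mod int n = snd g} \<noteq> {}"
      then obtain y x where h: "y \<in> X" "int n * fst y = fst g" by blast
      have "\<bar>fst g\<bar> = \<bar>int n * fst y\<bar>" using h(2) by simp
      also have "\<dots> = N * \<bar>fst y\<bar>" by (simp add: abs_mult N_def)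
      finally have "\<bar>fst g\<bar> = N * \<bar>fst y\<bar>" .
      also have "\<dots> \<le> N * B" using Bx[OF h(1)] N1 by (intro mult_left_mono) auto
      finally show False using g by simp
    qed
    note e = this
    show ?thesis unfolding near_def e by simp
  qed
  have far: "\<bar>fst g\<bar> \<ge> int r - N * B \<and> \<bar>fst g\<bar> \<le> 2 * int r * B"
    if p: "p \<in> pairs n X r r' g" and g: "\<bar>fst g\<bar> > N * B" and rr: "int r - int r' = N" "int r \<ge> N" for p r r' g
  proof -
    obtain y x where yx: "p = (y,x)" by (cases p)
    have h: "y \<in> X" "x \<in> X" "int r * fst y - int r' * fst x = fst g"
      using p unfolding yx pairs_def by auto
    have r': "int r' = int r - N" using rr by simp
    have e: "fst g = int r * fst y - (int r - N) * fst x" using h(3) r' by simp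
    have "fst y \<noteq> fst x"
    proof
      assume "fst y = fst x"
      then have "fst g = N * fst y" using e by (simp add: algebra_simps)
      then have "\<bar>fst g\<bar> = N * \<bar>fst y\<bar>" using N1 by (simp add: abs_mult)
      also have "\<dots> \<le> N * B" using Bx[OF h(1)] N1 by (intro mult_left_mono) auto
      finally show False using g by simp
    qed
    have "\<bar>int r * fst y - (int r - N) * fst x\<bar> \<ge> int r - N * B"
      by (rule far_lower) (use Bx h \<open>fst y \<noteq> fst x\<close> N1 rr in auto)
    moreover have "\<bar>int r * fst y - (int r - N) * fst x\<bar> \<le> 2 * int r * B"
      by (rule far_upper) (use Bx h N1 rr in auto)
    ultimately show ?thesis using e by simp
  qed
  have L1: "S_subset D {g \<in> grp n. card (pairs n X r1 r1' g) = v}"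
    by (rule Ssub_level, rule cc_pairs[OF fin XS r1_def r1'_def])
  have L2: "S_subset D {g \<in> grp n. card (pairs n X r2 r2' g) = v}"
    by (rule Ssub_level, rule cc_pairs[OF fin XS r2_def r2'_def])
  have "{g \<in> grp n. near n X g = v} = {g \<in> grp n. card (pairs n X r1 r1' g) = v} \<inter> {g \<in> grp n. card (pairs n X r2 r2' g) = v}"
  proof (intro set_eqI iffI)
    fix g assume a: "g \<in> {g \<in> grp n. near n X g = v}"
    then have "\<not> \<bar>fst g\<bar> > N * B" using near0 v by fastforce
    then have "\<bar>fst g\<bar> \<le> N * B" by simp
    then show "g \<in> {g \<in> grp n. card (pairs n X r1 r1' g) = v} \<inter> {g \<in> grp n. card (pairs n X r2 r2' g) = v}"
      using a key_near[OF _ d1 big1] key_near[OF _ d2 big2'] by simp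
  next
    fix g assume a: "g \<in> {g \<in> grp n. card (pairs n X r1 r1' g) = v} \<inter> {g \<in> grp n. card (pairs n X r2 r2' g) = v}"
    show "g \<in> {g \<in> grp n. near n X g = v}"
    proof (cases "\<bar>fst g\<bar> \<le> N * B")
      case True
      then show ?thesis using a key_near[OF _ d1 big1] by simp
    next
      case False
      then have gt: "\<bar>fst g\<bar> > N * B" by simp
      have "pairs n X r1 r1' g \<noteq> {}" using a v by auto
      then obtain p1 where p1: "p1 \<in> pairs n X r1 r1' g" by blast
      have "pairs n X r2 r2' g \<noteq> {}" using a v by auto
      then obtain p2 where p2: "p2 \<in> pairs n X r2 r2' g" by blast
      have "\<bar>fst g\<bar> \<le> 2 * int r1 * B" using far[OF p1 gt d1 rN1] by simp
      moreover have "\<bar>fst g\<bar> \<ge> int r2 - N * B" using far[OF p2 gt d2 rN2] by simp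
      ultimately show ?thesis using big2 by simp
    qed
  qed
  then show ?thesis using Ssub_Int[OF L1 L2] by simp
qed

lemma T_Ssub: "S_subset D (Znpart n)"
proof -
  have T: "Znpart n = {g \<in> grp n. fst g = 0}" by (auto simp: Znpart_def grp_def)
  have "\<forall>C\<in>D. \<forall>x\<in>C. x \<in> Znpart n \<longrightarrow> C \<subseteq> Znpart n"
  proof (intro ballI impI subsetI)
    fix C x c assume C: "C \<in> D" and x: "x \<in> C" "x \<in> Znpart n" and c: "c \<in> C"
    have finC: "finite C" using cls_fin[OF C] .
    define B :: int where "B = (\<Sum>c\<in>C. \<bar>fst c\<bar>)"
    have Bx: "\<bar>fst y\<bar> \<le> B" if "y \<in> C" for y unfolding B_def by (rule abs_bound_sum[OF finC that])
    have B0: "B \<ge> 0" unfolding B_def by (rule sum_nonneg) simp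
    define r :: nat where "r = 1 + n * (nat B + 1)"
    have ir: "int r = 1 + int n * (B + 1)" unfolding r_def using B0 by (simp add: algebra_simps)
    have "(int n - 1) * (B + 1) \<ge> 0" using npos B0 by simp
    moreover have "int n * (B + 1) = (B + 1) + (int n - 1) * (B + 1)" by (simp add: algebra_simps)
    ultimately have rB: "int r > B" using ir by linarith
    have SC: "S_subset D (gpow n r ` C)"
    proof (rule mult_gen)
      show "coprime r n" unfolding r_def by (rule cop1)
    qed (use finC Ssub_cls_self[OF C] in \<open>auto simp: r_def\<close>)
    have xg: "x \<in> grp n" using cls_grp[OF C] x(1) by blast
    have "gpow n r x = x"
    proof -
      have fx: "fst x = 0" using x(2) T by simp
      have "(int r * snd x) mod int n = (snd x + int n * ((B + 1) * snd x)) mod int n"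
        using ir by (simp add: algebra_simps)
      also have "\<dots> = snd x mod int n" by simp
      also have "\<dots> = snd x" using xg by (simp add: grp_iff)
      finally show ?thesis using fx by (simp add: gpow_def prod_eq_iff)
    qed
    then have "x \<in> gpow n r ` C" using x(1) by (metis image_eqI)
    then have "C \<subseteq> gpow n r ` C" using Ssub_cls[OF SC C x(1)] by simp
    then obtain y where y: "y \<in> C" "c = gpow n r y" using c by blast
    have fc: "fst c = int r * fst y" using y(2) by (simp add: gpow_def)
    have "fst y = 0"
    proof (rule ccontr)
      assume "fst y \<noteq> 0"
      then have "\<bar>fst y\<bar> \<ge> 1" by simp
      then have "int r * 1 \<le> int r * \<bar>fst y\<bar>" by (intro mult_left_mono) auto
      then have "\<bar>fst c\<bar> \<ge> int r" using fc by (simp add: abs_mult)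
      then show False using Bx[OF c] rB by simp
    qed
    then show "c \<in> Znpart n" using fc cls_grp[OF C] c T by auto
  qed
  moreover have "Znpart n \<subseteq> grp n" using T by auto
  ultimately show ?thesis unfolding Ssub_iff by blast
qed

end

lemma card_ne0: "card A \<noteq> 0 \<Longrightarrow> A \<noteq> {}" by (rule notI) simp

definition zsub :: "nat \<Rightarrow> int set \<Rightarrow> bool" where
  "zsub n R \<longleftrightarrow> R \<subseteq> {0..<int n} \<and> 0 \<in> R \<and> (\<forall>a\<in>R. \<forall>b\<in>R. (a + b) mod int n \<in> R)"

lemma zsub_dvd:
  assumes n: "n \<ge> 1" and R: "zsub n R" and d: "d \<in> R"
  shows "int n dvd int (card R) * d"
proof -
  have Rs: "R \<subseteq> {0..<int n}" and cl: "\<forall>a\<in>R. \<forall>b\<in>R. (a + b) mod int n \<in> R" using R unfolding zsub_def by auto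
  have fin: "finite R" using Rs finite_subset by blast
  define f where "f x = (x + d) mod int n" for x
  have fR: "f ` R \<subseteq> R" unfolding f_def using cl d by auto
  have inj: "inj_on f R"
  proof (rule inj_onI)
    fix x y assume xy: "x \<in> R" "y \<in> R" "f x = f y"
    then have "int n dvd (x + d) - (y + d)" unfolding f_def by (simp only: mod_eq_dvd_iff)
    then have "int n dvd x - y" by simp
    then have "x mod int n = y mod int n" by (simp only: mod_eq_dvd_iff)
    moreover have "0 \<le> x" "x < int n" "0 \<le> y" "y < int n" using xy Rs by auto
    ultimately show "x = y" by simp
  qed
  have img: "f ` R = R" by (rule endo_inj_surj[OF fin fR inj])
  have "sum (\<lambda>x. x) R = sum (\<lambda>x. x) (f ` R)" using img by simp
  also have "\<dots> = sum f R" by (rule sum.reindex[OF inj, unfolded comp_def])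
  finally have s1: "sum (\<lambda>x. x) R = sum f R" .
  have "sum f R mod int n = (\<Sum>x\<in>R. x + d) mod int n" unfolding f_def by (rule mod_sum_eq)
  also have "(\<Sum>x\<in>R. x + d) = sum (\<lambda>x. x) R + int (card R) * d" by (simp add: sum.distrib)
  finally have "sum (\<lambda>x. x) R mod int n = (sum (\<lambda>x. x) R + int (card R) * d) mod int n" using s1 by simp
  then have "int n dvd sum (\<lambda>x. x) R - (sum (\<lambda>x. x) R + int (card R) * d)" by (simp only: mod_eq_dvd_iff)
  then show ?thesis by simp
qed

lemma card_M:
  fixes n v :: nat
  assumes n: "n \<ge> 1" and v: "v \<ge> 1"
  shows "card {d \<in> {0..<int n}. int n dvd int v * d} \<le> v"
proof -
  define g where "g = gcd n v"
  have g1: "g \<ge> 1" using n unfolding g_def by (simp add: Suc_le_eq)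
  obtain n' where n': "n = g * n'" unfolding g_def by (metis gcd_dvd1 dvdE)
  obtain v' where v': "v = g * v'" unfolding g_def by (metis gcd_dvd2 dvdE)
  have "g * gcd n' v' = gcd (g * n') (g * v')" by (rule gcd_mult_distrib_nat)
  also have "gcd (g * n') (g * v') = gcd n v" by (simp only: n'[symmetric] v'[symmetric])
  also have "\<dots> = g" by (simp add: g_def)
  finally have "g * gcd n' v' = g * 1" by simp
  then have "gcd n' v' = 1" using g1 by simp
  then have cop: "coprime (int n') (int v')" by (simp add: coprime_iff_gcd_eq_1)
  have gv: "g \<le> v" unfolding g_def using v by (simp add: gcd_le2_nat)
  have n'1: "n' \<ge> 1" using n n' by (cases n') auto
  have sub: "{d \<in> {0..<int n}. int n dvd int v * d} \<subseteq> (\<lambda>i. int n' * i) ` {0..<int g}"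
  proof
    fix d assume "d \<in> {d \<in> {0..<int n}. int n dvd int v * d}"
    then have d: "0 \<le> d" "d < int n" "int n dvd int v * d" by auto
    have "int g * int n' dvd int g * (int v' * d)" using d(3) n' v' by (simp add: mult.assoc)
    then have "int n' dvd int v' * d" using g1 by simp
    then have "int n' dvd d" using cop by (simp add: coprime_dvd_mult_right_iff)
    then obtain i where i: "d = int n' * i" by blast
    have "0 \<le> i" using d(1) i n'1 by (simp add: zero_le_mult_iff)
    moreover have "i < int g"
    proof (rule ccontr)
      assume "\<not> i < int g"
      then have "int n' * int g \<le> int n' * i" using n'1 by (intro mult_left_mono) auto
      then show False using d(2) i n' by (simp add: mult.commute)
    qed
    ultimately show "d \<in> (\<lambda>i. int n' * i) ` {0..<int g}" using i by auto
  qed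
  have "card {d \<in> {0..<int n}. int n dvd int v * d} \<le> card ((\<lambda>i. int n' * i) ` {0..<int g})"
    by (rule card_mono[OF _ sub]) simp
  also have "\<dots> \<le> card {0..<int g}" by (rule card_image_le) simp
  also have "\<dots> = g" by simp
  finally show ?thesis using gv by simp
qed

lemma zsub_unique:
  assumes n: "n \<ge> 1" and R1: "zsub n R1" and R2: "zsub n R2" and c: "card R1 = card R2"
  shows "R1 = R2"
proof -
  define v where "v = card R1"
  define M where "M = {d \<in> {0..<int n}. int n dvd int v * d}"
  have fin: "finite R1" "finite R2" using R1 R2 unfolding zsub_def by (auto intro: finite_subset)
  have v1: "v \<ge> 1" using R1 fin unfolding zsub_def v_def by (auto simp: Suc_le_eq card_gt_0_iff)
  have finM: "finite M" unfolding M_def by (rule finite_subset[of _ "{0..<int n}"]) auto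
  have s1: "R1 \<subseteq> M" unfolding M_def v_def using zsub_dvd[OF n R1] R1 unfolding zsub_def by auto
  have s2: "R2 \<subseteq> M" unfolding M_def v_def using zsub_dvd[OF n R2] R2 c unfolding zsub_def by auto
  have cM: "card M \<le> v" unfolding M_def by (rule card_M[OF n v1])
  have "R1 = M" by (rule card_subset_eq[OF finM s1]) (use cM card_mono[OF finM s1] v_def in simp)
  moreover have "R2 = M" by (rule card_subset_eq[OF finM s2]) (use cM card_mono[OF finM s2] v_def c in simp)
  ultimately show ?thesis by simp
qed

lemma near_nz:
  assumes "near n X g \<noteq> 0"
  shows "\<exists>y\<in>X. fst g = int n * fst y"
proof -
  have "{(y,x). y \<in> X \<and> x \<in> X \<and> fst y = fst x \<and> int n * fst y = fst g \<and> (snd y - snd x) mod int n = snd g} \<noteq> {}"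
    using assms unfolding near_def by (rule card_ne0)
  then obtain y x where y: "y \<in> X" "int n * fst y = fst g" by blast
  show ?thesis by (rule bexI[of _ y]) (use y in auto)
qed

lemma near_formula:
  assumes n: "n \<ge> 1" and X: "X \<subseteq> grp n" and d: "0 \<le> d" "d < int n"
  shows "near n X (int n * k, d) = card {x\<in>X. fst x = k \<and> (k, (snd x + d) mod int n) \<in> X}"
proof -
  let ?P = "{(y,x). y \<in> X \<and> x \<in> X \<and> fst y = fst x \<and> int n * fst y = fst (int n * k, d) \<and> (snd y - snd x) mod int n = snd (int n * k, d)}"
  let ?f = "\<lambda>x. ((k, (snd x + d) mod int n), x)"
  have "?P = ?f ` {x\<in>X. fst x = k \<and> (k, (snd x + d) mod int n) \<in> X}"
  proof (intro set_eqI iffI)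
    fix p assume "p \<in> ?P"
    then obtain y x where p: "p = (y,x)" "y \<in> X" "x \<in> X" "fst y = fst x" "int n * fst y = int n * k"
        "(snd y - snd x) mod int n = d" by auto
    have fy: "fst y = k" using p(5) n by simp
    have yg: "0 \<le> snd y" "snd y < int n" using X p(2) by (auto simp: grp_iff)
    have "(snd x + d) mod int n = (snd x + (snd y - snd x) mod int n) mod int n" using p(6) by simp
    also have "\<dots> = snd y mod int n" by (simp add: mod_add_right_eq)
    also have "\<dots> = snd y" using yg by simp
    finally have sy: "(snd x + d) mod int n = snd y" .
    have "y = (k, (snd x + d) mod int n)" using fy sy by (simp add: prod_eq_iff)
    then show "p \<in> ?f ` {x\<in>X. fst x = k \<and> (k, (snd x + d) mod int n) \<in> X}"
      using p fy by auto
  next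
    fix p assume "p \<in> ?f ` {x\<in>X. fst x = k \<and> (k, (snd x + d) mod int n) \<in> X}"
    then obtain x where x: "x \<in> X" "fst x = k" "(k, (snd x + d) mod int n) \<in> X" "p = ?f x" by auto
    have "((snd x + d) mod int n - snd x) mod int n = (snd x + d - snd x) mod int n" by (simp add: mod_diff_left_eq)
    also have "\<dots> = d" using d by simp
    finally show "p \<in> ?P" using x by auto
  qed
  moreover have "inj_on ?f {x\<in>X. fst x = k \<and> (k, (snd x + d) mod int n) \<in> X}" by (auto simp: inj_on_def)
  ultimately show ?thesis unfolding near_def by (simp add: card_image)
qed

lemma near_fin:
  assumes "finite X" "v \<ge> 1"
  shows "finite {g \<in> grp n. near n X g = v}"
proof -
  have "{g \<in> grp n. near n X g = v} \<subseteq> (\<lambda>(y,d). (int n * fst y, d)) ` (X \<times> {0..<int n})"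
  proof
    fix g assume g: "g \<in> {g \<in> grp n. near n X g = v}"
    then obtain y where y: "y \<in> X" "fst g = int n * fst y" using near_nz[of n X g] assms by auto
    have "snd g \<in> {0..<int n}" using g by (auto simp: grp_iff)
    then show "g \<in> (\<lambda>(y,d). (int n * fst y, d)) ` (X \<times> {0..<int n})"
      using y by (intro image_eqI[where x="(y, snd g)"]) (auto simp: prod_eq_iff)
  qed
  moreover have "finite ((\<lambda>(y,d). (int n * fst y, d)) ` (X \<times> {0..<int n}))" using assms by simp
  ultimately show ?thesis by (rule finite_subset)
qed

lemma card_pairs_u:
  assumes n: "n \<ge> 1" and g: "g \<in> grp n" and U: "U \<subseteq> grp n" and V: "V \<subseteq> grp n"
  shows "card {(u,w). u \<in> U \<and> w \<in> V \<and> gmul n u w = g} = card {u\<in>U. gmul n (ginv n u) g \<in> V}"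
proof -
  let ?f = "\<lambda>u. (u, gmul n (ginv n u) g)"
  have eq1: "gmul n (ginv n u) g = w" if "w \<in> grp n" "gmul n u w = g" for u w
  proof -
    have "gmul n (ginv n u) g = gmul n (gmul n (ginv n u) u) w" using that(2) by (simp add: gmul_assoc)
    also have "gmul n (ginv n u) u = gone" by (simp add: gmul_comm gmul_inv)
    finally show ?thesis using gmul_one that(1) by simp
  qed
  have eq2: "gmul n u (gmul n (ginv n u) g) = g" for u
  proof -
    have "gmul n u (gmul n (ginv n u) g) = gmul n (gmul n u (ginv n u)) g" by (simp add: gmul_assoc)
    also have "\<dots> = g" using gmul_inv gmul_one g by simp
    finally show ?thesis .
  qed
  have "{(u,w). u \<in> U \<and> w \<in> V \<and> gmul n u w = g} = ?f ` {u\<in>U. gmul n (ginv n u) g \<in> V}"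
  proof (intro set_eqI iffI)
    fix p assume "p \<in> {(u,w). u \<in> U \<and> w \<in> V \<and> gmul n u w = g}"
    then obtain u w where p: "p = (u,w)" "u \<in> U" "w \<in> V" "gmul n u w = g" by auto
    then have "gmul n (ginv n u) g = w" using eq1 V by blast
    then show "p \<in> ?f ` {u\<in>U. gmul n (ginv n u) g \<in> V}" using p by auto
  next
    fix p assume "p \<in> ?f ` {u\<in>U. gmul n (ginv n u) g \<in> V}"
    then show "p \<in> {(u,w). u \<in> U \<and> w \<in> V \<and> gmul n u w = g}" using eq2 by auto
  qed
  moreover have "inj_on ?f {u\<in>U. gmul n (ginv n u) g \<in> V}" by (auto simp: inj_on_def)
  ultimately show ?thesis by (simp add: card_image)
qed

context SR
begin

lemma gen_subgroup:
  assumes fin: "finite Y" and YS: "S_subset D Y" and YZ: "Y \<subseteq> Zpart"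
  shows "\<exists>W. S_subgroup n D W \<and> W \<subseteq> Zpart \<and> Y \<subseteq> W"
proof -
  have Yg: "Y \<subseteq> grp n" using Ssub_grp[OF YS] .
  define Y' where "Y' = Y \<union> ginv n ` Y \<union> {gone}"
  have finY': "finite Y'" unfolding Y'_def using fin by simp
  have SY': "S_subset D Y'" unfolding Y'_def
    using Ssub_Union[of "{Y, ginv n ` Y, {gone}}"] YS Ssub_inv[OF YS] Ssub_cls_self[OF one_cls] by auto
  have Y'g: "Y' \<subseteq> grp n" using Ssub_grp[OF SY'] .
  have Y'Z: "snd y = 0" if "y \<in> Y'" for y
    using that YZ unfolding Y'_def Zpart_def by (auto simp: ginv_def gone_def)
  have Y'inv: "ginv n y \<in> Y'" if yY: "y \<in> Y'" for y
  proof -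
    consider "y \<in> Y" | "y \<in> ginv n ` Y" | "y = gone" using yY unfolding Y'_def by blast
    then show ?thesis
    proof cases
      case 1 then show ?thesis unfolding Y'_def by blast
    next
      case 2 then obtain z where "z \<in> Y" "y = ginv n z" by blast
      then have "ginv n y = z" using ginv_ginv Yg by blast
      then show ?thesis using \<open>z \<in> Y\<close> unfolding Y'_def by blast
    next
      case 3 then show ?thesis unfolding Y'_def by (simp add: ginv_def gone_def)
    qed
  qed
  define W where "W = (\<Union>k. lprod n ` lstn Y' k)"
  have Wk: "lprod n ` lstn Y' k = {g \<in> grp n. cnt n Y' k g \<noteq> 0}" for k
  proof (intro set_eqI iffI)
    fix g assume "g \<in> lprod n ` lstn Y' k"
    then obtain xs where xs: "xs \<in> lstn Y' k" "g = lprod n xs" by blast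
    have "xs \<in> {xs. set xs \<subseteq> Y' \<and> length xs = k \<and> lprod n xs = g}" using xs unfolding lstn_def by simp
    moreover have "finite {xs. set xs \<subseteq> Y' \<and> length xs = k \<and> lprod n xs = g}"
      using lstn_fin[OF finY', of k] unfolding lstn_def by (rule finite_subset[rotated]) auto
    ultimately have "card {xs. set xs \<subseteq> Y' \<and> length xs = k \<and> lprod n xs = g} > 0"
      by (subst card_gt_0_iff) blast
    then have "cnt n Y' k g \<noteq> 0" unfolding cnt_def by simp
    then show "g \<in> {g \<in> grp n. cnt n Y' k g \<noteq> 0}" using xs lprod_grp npos by simp
  next
    fix g assume "g \<in> {g \<in> grp n. cnt n Y' k g \<noteq> 0}"
    then have "{xs. set xs \<subseteq> Y' \<and> length xs = k \<and> lprod n xs = g} \<noteq> {}" unfolding cnt_def by (intro card_ne0) simp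
    then show "g \<in> lprod n ` lstn Y' k" unfolding lstn_def by blast
  qed
  have SW: "S_subset D W" unfolding W_def
    by (rule Ssub_Union) (use Wk Ssub_level[OF cc_cnt[OF finY' SY']] in auto)
  have Wg: "W \<subseteq> grp n" unfolding W_def using lprod_grp npos by auto
  have one: "gone \<in> W" unfolding W_def
    by (rule UN_I[of 0]) (auto simp: lstn_def lprod_Nil intro: image_eqI[where x="[]"])
  have mul: "gmul n a b \<in> W" if aW: "a \<in> W" and bW: "b \<in> W" for a b
  proof -
    obtain k1 xs where xs: "xs \<in> lstn Y' k1" "a = lprod n xs" using aW unfolding W_def by blast
    obtain k2 ys where ys: "ys \<in> lstn Y' k2" "b = lprod n ys" using bW unfolding W_def by blast
    have "xs @ ys \<in> lstn Y' (k1 + k2)" using xs ys unfolding lstn_def by auto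
    moreover have "gmul n a b = lprod n (xs @ ys)" using xs ys by (simp add: lprod_append)
    ultimately show ?thesis unfolding W_def by blast
  qed
  have inv: "ginv n a \<in> W" if aW: "a \<in> W" for a
  proof -
    obtain k xs where xs: "xs \<in> lstn Y' k" "a = lprod n xs" using aW unfolding W_def by blast
    have "map (ginv n) xs \<in> lstn Y' k" using xs Y'inv unfolding lstn_def by auto
    moreover have "ginv n a = lprod n (map (ginv n) xs)" using xs by (simp add: lprod_map_inv)
    ultimately show ?thesis unfolding W_def by blast
  qed
  have WZ: "W \<subseteq> Zpart"
  proof
    fix g assume "g \<in> W"
    then obtain k xs where xs: "xs \<in> lstn Y' k" "g = lprod n xs" unfolding W_def by blast
    have "\<forall>x\<in>set xs. snd x = 0" using xs Y'Z unfolding lstn_def by auto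
    then have "sum_list (map snd xs) = 0" by (induction xs) auto
    then show "g \<in> Zpart" using xs unfolding Zpart_def lprod_def by auto
  qed
  have YW: "Y \<subseteq> W"
  proof
    fix y assume y: "y \<in> Y"
    have "[y] \<in> lstn Y' 1" using y unfolding lstn_def Y'_def by auto
    moreover have "lprod n [y] = y" using Yg y by (cases y) (auto simp: lprod_def grp_iff)
    ultimately have "y \<in> lprod n ` lstn Y' 1" by (metis image_eqI)
    then show "y \<in> W" unfolding W_def by blast
  qed
  have "S_subgroup n D W" unfolding S_subgroup_def subgrp_def using SW Wg one mul inv by blast
  then show ?thesis using WZ YW by blast
qed

end

lemma zsub_mult:
  assumes R: "zsub n R" and d: "d \<in> R"
  shows "(int k * d) mod int n \<in> R"
proof (induction k)
  case 0
  then show ?case using R unfolding zsub_def by simp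
next
  case (Suc k)
  have "(int (Suc k) * d) mod int n = ((int k * d) mod int n + d) mod int n"
    by (simp add: algebra_simps mod_add_right_eq)
  then show ?case using Suc d R unfolding zsub_def by simp
qed

lemma zsub_neg:
  assumes n: "n \<ge> 1" and R: "zsub n R" and d: "d \<in> R"
  shows "(- d) mod int n \<in> R"
proof -
  have "(int (n - 1) * d) mod int n \<in> R" by (rule zsub_mult[OF R d])
  moreover have "int (n - 1) * d = - d + int n * d" using n by (simp add: of_nat_diff algebra_simps)
  moreover have "(- d + int n * d) mod int n = (- d) mod int n" by (rule mod_mult_self2)
  ultimately show ?thesis by simp
qed

lemma zsub_diff:
  assumes n: "n \<ge> 1" and R: "zsub n R" and a: "a \<in> R" and b: "b \<in> R"
  shows "(a - b) mod int n \<in> R"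
proof -
  have "(a + (- b) mod int n) mod int n \<in> R" using R a zsub_neg[OF n R b] unfolding zsub_def by simp
  moreover have "(a + (- b) mod int n) mod int n = (a - b) mod int n" by (simp add: mod_add_right_eq)
  ultimately show ?thesis by simp
qed

context SR
begin

lemma main:
  assumes H_max: "\<forall>H'. S_subgroup n D H' \<and> H' \<subseteq> Zpart \<longrightarrow> H' \<subseteq> H"
    and H_index: "H = (\<lambda>k. (int m * k, 0)) ` UNIV"
    and dvd: "n dvd m"
    and C: "C \<in> D"
    and Cout: "C \<subseteq> grp n - {(x, y). x \<in> (\<lambda>k. int (m div n) * k) ` UNIV \<and> y \<in> {0..<int n}}"
  shows "\<exists>L. S_subgroup n D L \<and> L \<subseteq> Znpart n \<and> L \<noteq> {gone} \<and> (\<exists>X. C = (\<Union>x\<in>X. gmul n x ` L))"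
proof -
  have finC: "finite C" using cls_fin[OF C] .
  have Cg: "C \<subseteq> grp n" using cls_grp[OF C] .
  have Cne: "C \<noteq> {}" using cls_ne[OF C] .
  have SC: "S_subset D C" using Ssub_cls_self[OF C] .
  have n1: "n \<ge> 1" using npos .
  have xC: "x = (fst x, snd x)" for x :: "int \<times> int" by simp
  \<comment> \<open>the key contradiction: no S-set inside Zpart contains (n*k,0) for a layer k of C\<close>
  have noH: "(int n * k, 0) \<notin> H" if kC: "k \<in> fst ` C" for k
  proof
    assume "(int n * k, 0) \<in> H"
    then obtain j where j: "int n * k = int m * j" using H_index by auto
    obtain m' where m': "m = n * m'" using dvd by blast
    have "m div n = m'" using m' n1 by simp
    have "int n * k = int n * (int m' * j)" using j m' by (simp add: algebra_simps)
    then have kj: "k = int m' * j" using n1 by simp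
    obtain x where x: "x \<in> C" "fst x = k" using kC by blast
    have "snd x \<in> {0..<int n}" using Cg x(1) by (auto simp: grp_iff)
    then have "x \<in> {(x, y). x \<in> (\<lambda>k. int (m div n) * k) ` UNIV \<and> y \<in> {0..<int n}}"
      using x kj \<open>m div n = m'\<close> by (cases x) auto
    then show False using Cout x(1) by blast
  qed
  have noZ: False if Yf: "finite Y" and YS: "S_subset D Y" and YZ: "Y \<subseteq> Zpart"
      and kC: "k \<in> fst ` C" and kY: "(int n * k, 0) \<in> Y" for Y k
  proof -
    obtain W where W: "S_subgroup n D W" "W \<subseteq> Zpart" "Y \<subseteq> W" using gen_subgroup[OF Yf YS YZ] by blast
    then have "W \<subseteq> H" using H_max by blast
    then show False using W(3) kY noH[OF kC] by blast
  qed
  define lay where "lay k = {x \<in> C. fst x = k}" for k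
  define K0 where "K0 = fst ` C"
  define s where "s = Max ((\<lambda>k. card (lay k)) ` K0)"
  define Rs where "Rs k = {d \<in> {0..<int n}. \<forall>x\<in>lay k. (k, (snd x + d) mod int n) \<in> C}" for k
  have finK0: "finite K0" unfolding K0_def using finC by simp
  have neK0: "K0 \<noteq> {}" unfolding K0_def using Cne by simp
  have lay_fin: "finite (lay k)" for k unfolding lay_def using finC by simp
  have s_ge: "card (lay k) \<le> s" if "k \<in> K0" for k
    unfolding s_def using finK0 that by (intro Max_ge) auto
  obtain k0 where k0: "k0 \<in> K0" "card (lay k0) = s"
  proof -
    have "s \<in> (\<lambda>k. card (lay k)) ` K0" unfolding s_def using finK0 neK0 by (intro Max_in) auto
    then show ?thesis using that by blast
  qed
  have s1: "s \<ge> 1"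
  proof -
    obtain x where "x \<in> C" "fst x = k0" using k0(1) unfolding K0_def by blast
    then have "lay k0 \<noteq> {}" unfolding lay_def by blast
    then have "card (lay k0) > 0" using lay_fin[of k0] by (simp add: card_gt_0_iff)
    then show ?thesis using k0(2) by simp
  qed
  have layK0: "k \<in> K0" if "card (lay k) = s" for k
  proof (rule ccontr)
    assume "k \<notin> K0"
    then have "lay k = {}" unfolding lay_def K0_def by (force simp: image_iff)
    then show False using that s1 by simp
  qed
  have Rz: "zsub n (Rs k)" for k
  proof -
    have "Rs k \<subseteq> {0..<int n}" unfolding Rs_def by blast
    moreover have "0 \<in> Rs k"
    proof -
      have "(k, (snd x + 0) mod int n) \<in> C" if "x \<in> lay k" for x
      proof -
        have "x \<in> C" "fst x = k" using that unfolding lay_def by auto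
        moreover have "(snd x + 0) mod int n = snd x" using Cg \<open>x \<in> C\<close> by (auto simp: grp_iff)
        ultimately have "(k, (snd x + 0) mod int n) = x" by (simp add: prod_eq_iff)
        then show ?thesis using \<open>x \<in> C\<close> by simp
      qed
      then show ?thesis unfolding Rs_def using n1 by simp
    qed
    moreover have "(a + b) mod int n \<in> Rs k" if "a \<in> Rs k" "b \<in> Rs k" for a b
    proof -
      have "(k, (snd x + (a + b) mod int n) mod int n) \<in> C" if x: "x \<in> lay k" for x
      proof -
        have x1: "(k, (snd x + a) mod int n) \<in> C" using x \<open>a \<in> Rs k\<close> unfolding Rs_def by blast
        then have "(k, (snd x + a) mod int n) \<in> lay k" unfolding lay_def by simp
        then have "(k, ((snd x + a) mod int n + b) mod int n) \<in> C" using \<open>b \<in> Rs k\<close> unfolding Rs_def by auto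
        moreover have "((snd x + a) mod int n + b) mod int n = (snd x + (a + b) mod int n) mod int n"
          by (simp add: mod_add_left_eq mod_add_right_eq add.assoc)
        ultimately show ?thesis by simp
      qed
      then show ?thesis unfolding Rs_def using n1 by simp
    qed
    ultimately show ?thesis unfolding zsub_def by blast
  qed
  have Rs_fin: "finite (Rs k)" for k unfolding Rs_def by (rule finite_subset[of _ "{0..<int n}"]) auto
  have Rs_grp: "d \<in> Rs k \<Longrightarrow> 0 \<le> d \<and> d < int n" for k d unfolding Rs_def by auto
  define Y where "Y = {g \<in> grp n. near n C g = s}"
  have finY: "finite Y" unfolding Y_def by (rule near_fin[OF finC s1])
  have SY: "S_subset D Y" unfolding Y_def by (rule near_Ssub[OF finC SC s1])
  have Yg: "Y \<subseteq> grp n" unfolding Y_def by blast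
  have nearC: "near n C (int n * k, d) = card {x\<in>lay k. (k, (snd x + d) mod int n) \<in> C}"
    if "0 \<le> d" "d < int n" for k d
    unfolding lay_def using near_formula[OF n1 Cg that, of k] by (simp add: conj_assoc)
  have Y_char: "(int n * k, d) \<in> Y \<longleftrightarrow> card (lay k) = s \<and> d \<in> Rs k" for k d
  proof
    assume a: "(int n * k, d) \<in> Y"
    then have d: "0 \<le> d" "d < int n" unfolding Y_def by (auto simp: grp_iff)
    have nv: "near n C (int n * k, d) = s" using a unfolding Y_def by simp
    let ?S = "{x\<in>lay k. (k, (snd x + d) mod int n) \<in> C}"
    have cS: "card ?S = s" using nv nearC[OF d] by simp
    have sub: "?S \<subseteq> lay k" by blast
    have "card ?S \<le> card (lay k)" by (rule card_mono[OF lay_fin sub])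
    moreover have "?S \<noteq> {}" using cS s1 by (intro card_ne0) simp
    then have "k \<in> K0" unfolding lay_def K0_def by (force simp: image_iff)
    then have "card (lay k) \<le> s" by (rule s_ge)
    ultimately have cl: "card (lay k) = s" using cS by simp
    then have "?S = lay k" using card_subset_eq[OF lay_fin sub] cS by simp
    then have "d \<in> Rs k" unfolding Rs_def using d by auto
    then show "card (lay k) = s \<and> d \<in> Rs k" using cl by simp
  next
    assume a: "card (lay k) = s \<and> d \<in> Rs k"
    then have d: "0 \<le> d" "d < int n" using Rs_grp by auto
    have "{x\<in>lay k. (k, (snd x + d) mod int n) \<in> C} = lay k" using a unfolding Rs_def by auto
    then have "near n C (int n * k, d) = s" using nearC[OF d] a by simp
    then show "(int n * k, d) \<in> Y" unfolding Y_def using d by (simp add: grp_iff)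
  qed
  have Y_form: "\<exists>k. fst g = int n * k \<and> card (lay k) = s \<and> snd g \<in> Rs k" if "g \<in> Y" for g
  proof -
    have "near n C g \<noteq> 0" using that s1 unfolding Y_def by simp
    then obtain y where "y \<in> C" "fst g = int n * fst y" using near_nz by blast
    then have "g = (int n * fst y, snd g)" by (simp add: prod_eq_iff)
    then have "(int n * fst y, snd g) \<in> Y" using that by simp
    then show ?thesis using Y_char \<open>fst g = int n * fst y\<close> by blast
  qed
  show ?thesis
  proof (cases "\<exists>k. card (lay k) = s \<and> Rs k \<noteq> {0}")
    case False
    have YZ: "Y \<subseteq> Zpart"
    proof
      fix g assume "g \<in> Y"
      then obtain k where k: "fst g = int n * k" "card (lay k) = s" "snd g \<in> Rs k" using Y_form by blast
      then have "Rs k = {0}" using False by blast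
      then have "snd g = 0" using k by simp
      then show "g \<in> Zpart" unfolding Zpart_def by (intro CollectI exI[of _ "fst g"]) (simp add: prod_eq_iff)
    qed
    have "0 \<in> Rs k0" using Rz[of k0] unfolding zsub_def by blast
    then have "(int n * k0, 0) \<in> Y" using Y_char[of k0 0] k0(2) by simp
    moreover have "k0 \<in> fst ` C" using k0(1) unfolding K0_def .
    ultimately have False using noZ[OF finY SY YZ] by simp
    then show ?thesis by (rule FalseE)
  next
    case True
    then obtain ks where ks: "card (lay ks) = s" "Rs ks \<noteq> {0}" by blast
    define R where "R = Rs ks"
    have RZ: "zsub n R" unfolding R_def by (rule Rz)
    obtain d0 where d0: "d0 \<in> R" "d0 \<noteq> 0" using ks(2) RZ unfolding R_def zsub_def by blast
    define v where "v = card R"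
    have v1: "v \<ge> 1" unfolding v_def using d0 Rs_fin[of ks] R_def by (simp add: Suc_le_eq card_gt_0_iff) blast
    define Z where "Z = {g \<in> grp n. near n Y g = v}"
    have finZ: "finite Z" unfolding Z_def by (rule near_fin[OF finY v1])
    have SZ: "S_subset D Z" unfolding Z_def by (rule near_Ssub[OF finY SY v1])
    have Yfib: "(int n * k, f) \<in> Y \<longleftrightarrow> card (lay k) = s \<and> f \<in> Rs k" for k f by (rule Y_char)
    have nearY: "near n Y (int n * (int n * k), d) = card {x\<in>Y. fst x = int n * k \<and> (int n * k, (snd x + d) mod int n) \<in> Y}"
      if "0 \<le> d" "d < int n" for k d
      by (rule near_formula[OF n1 Yg that])
    have Sfib: "{x\<in>Y. fst x = int n * k \<and> (int n * k, (snd x + d) mod int n) \<in> Y}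
        = (\<lambda>e. (int n * k, e)) ` {e \<in> Rs k. card (lay k) = s \<and> (e + d) mod int n \<in> Rs k}" for k d
    proof (intro set_eqI iffI)
      fix x assume x: "x \<in> {x\<in>Y. fst x = int n * k \<and> (int n * k, (snd x + d) mod int n) \<in> Y}"
      then have "x = (int n * k, snd x)" by (simp add: prod_eq_iff)
      then have "(int n * k, snd x) \<in> Y" using x by simp
      then have "card (lay k) = s" "snd x \<in> Rs k" using Yfib by auto
      moreover have "(e + d) mod int n \<in> Rs k" if "e = snd x" for e using x that Yfib by auto
      ultimately show "x \<in> (\<lambda>e. (int n * k, e)) ` {e \<in> Rs k. card (lay k) = s \<and> (e + d) mod int n \<in> Rs k}"
        using x by (intro image_eqI[where x="snd x"]) (auto simp: prod_eq_iff)
    next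
      fix x assume "x \<in> (\<lambda>e. (int n * k, e)) ` {e \<in> Rs k. card (lay k) = s \<and> (e + d) mod int n \<in> Rs k}"
      then obtain e where e: "x = (int n * k, e)" "e \<in> Rs k" "card (lay k) = s" "(e + d) mod int n \<in> Rs k" by blast
      then show "x \<in> {x\<in>Y. fst x = int n * k \<and> (int n * k, (snd x + d) mod int n) \<in> Y}" using Yfib by auto
    qed
    have cardS: "card ((\<lambda>e. (int n * k, e)) ` A) = card A" for k and A :: "int set"
      by (rule card_image) (auto simp: inj_on_def)
    have Z_form: "\<exists>k. fst g = int n * (int n * k) \<and> snd g \<in> R" if gZ: "g \<in> Z" for g
    proof -
      have gg: "0 \<le> snd g" "snd g < int n" using gZ unfolding Z_def by (auto simp: grp_iff)
      have "near n Y g \<noteq> 0" using gZ v1 unfolding Z_def by simp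
      then obtain y where y: "y \<in> Y" "fst g = int n * fst y" using near_nz by blast
      obtain k where k: "fst y = int n * k" "card (lay k) = s" "snd y \<in> Rs k" using Y_form[OF y(1)] by blast
      have g_eq: "g = (int n * (int n * k), snd g)" using y(2) k(1) by (simp add: prod_eq_iff)
      have "near n Y g = near n Y (int n * (int n * k), snd g)" using g_eq by simp
      also have "\<dots> = card {x\<in>Y. fst x = int n * k \<and> (int n * k, (snd x + snd g) mod int n) \<in> Y}"
        by (rule nearY[OF gg])
      also have "\<dots> = card {e \<in> Rs k. card (lay k) = s \<and> (e + snd g) mod int n \<in> Rs k}"
        unfolding Sfib by (rule cardS)
      finally have "near n Y g = card {e \<in> Rs k. card (lay k) = s \<and> (e + snd g) mod int n \<in> Rs k}" .
      then have cv: "card {e \<in> Rs k. card (lay k) = s \<and> (e + snd g) mod int n \<in> Rs k} = v" using gZ unfolding Z_def by simp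
      then obtain e where e: "e \<in> Rs k" "(e + snd g) mod int n \<in> Rs k" using v1 card_ne0[of "{e \<in> Rs k. card (lay k) = s \<and> (e + snd g) mod int n \<in> Rs k}"] by auto
      have "((e + snd g) mod int n - e) mod int n \<in> Rs k" by (rule zsub_diff[OF n1 Rz e(2) e(1)])
      moreover have "((e + snd g) mod int n - e) mod int n = snd g" using gg by (simp add: mod_diff_left_eq)
      ultimately have dR: "snd g \<in> Rs k" by simp
      have "{e \<in> Rs k. card (lay k) = s \<and> (e + snd g) mod int n \<in> Rs k} = Rs k"
        using k(2) Rz[of k] dR unfolding zsub_def by auto
      then have "card (Rs k) = card R" using cv v_def by simp
      then have "Rs k = R" using zsub_unique[OF n1 Rz RZ] by simp
      then show ?thesis using dR y(2) k(1) by auto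
    qed
    have Z_in: "(int n * (int n * ks), d) \<in> Z" if dR: "d \<in> R" for d
    proof -
      have gg: "0 \<le> d" "d < int n" using dR Rs_grp unfolding R_def by auto
      have "{e \<in> Rs ks. card (lay ks) = s \<and> (e + d) mod int n \<in> Rs ks} = Rs ks"
        using ks(1) Rz[of ks] dR unfolding zsub_def R_def by auto
      note e = this
      have "near n Y (int n * (int n * ks), d) = card {x\<in>Y. fst x = int n * ks \<and> (int n * ks, (snd x + d) mod int n) \<in> Y}"
        by (rule nearY[OF gg])
      also have "\<dots> = card {e \<in> Rs ks. card (lay ks) = s \<and> (e + d) mod int n \<in> Rs ks}"
        unfolding Sfib by (rule cardS)
      also have "\<dots> = v" unfolding e v_def R_def ..
      finally have "near n Y (int n * (int n * ks), d) = v" .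
      then show ?thesis unfolding Z_def using gg by (simp add: grp_iff)
    qed
    define Q where "Q = (\<lambda>d. (0::int, d)) ` R"
    have Qg: "Q \<subseteq> grp n" unfolding Q_def using Rs_grp R_def by (auto simp: grp_iff)
    have finQ: "finite Q" unfolding Q_def R_def using Rs_fin by simp
    have ginvZ: "finite (ginv n ` Z)" "S_subset D (ginv n ` Z)" using finZ Ssub_inv[OF SZ] by auto
    have Q_eq: "Q = Znpart n \<inter> {g \<in> grp n. pcnt n Z (ginv n ` Z) g \<noteq> 0}"
    proof (intro set_eqI iffI)
      fix g assume "g \<in> Q"
      then obtain d where d: "g = (0, d)" "d \<in> R" unfolding Q_def by blast
      have gg: "0 \<le> d" "d < int n" using d(2) Rs_grp unfolding R_def by auto
      have z1: "(int n * (int n * ks), d) \<in> Z" using Z_in d(2) by simp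
      have z2: "(int n * (int n * ks), 0) \<in> Z" using Z_in RZ unfolding zsub_def by simp
      have "gmul n (int n * (int n * ks), d) (ginv n (int n * (int n * ks), 0)) = g"
        using d gg by (simp add: gmul_def ginv_def)
      then have mem: "((int n * (int n * ks), d), ginv n (int n * (int n * ks), 0)) \<in> {(x,u). x \<in> Z \<and> u \<in> ginv n ` Z \<and> gmul n x u = g}"
        using z1 z2 by auto
      have fin: "finite {(x,u). x \<in> Z \<and> u \<in> ginv n ` Z \<and> gmul n x u = g}"
        by (rule finite_subset[of _ "Z \<times> ginv n ` Z"]) (use finZ in auto)
      have ne: "{(x,u). x \<in> Z \<and> u \<in> ginv n ` Z \<and> gmul n x u = g} \<noteq> {}"
        using mem by (metis empty_iff)
      have "card {(x,u). x \<in> Z \<and> u \<in> ginv n ` Z \<and> gmul n x u = g} > 0"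
        by (rule iffD2[OF card_gt_0_iff]) (rule conjI[OF ne fin])
      then have "pcnt n Z (ginv n ` Z) g \<noteq> 0" unfolding pcnt_def by simp
      moreover have "g \<in> Znpart n" using d gg unfolding Znpart_def by auto
      moreover have "g \<in> grp n" using d gg by (simp add: grp_iff)
      ultimately show "g \<in> Znpart n \<inter> {g \<in> grp n. pcnt n Z (ginv n ` Z) g \<noteq> 0}" by simp
    next
      fix g assume g: "g \<in> Znpart n \<inter> {g \<in> grp n. pcnt n Z (ginv n ` Z) g \<noteq> 0}"
      then have "{(x,u). x \<in> Z \<and> u \<in> ginv n ` Z \<and> gmul n x u = g} \<noteq> {}" unfolding pcnt_def by (intro card_ne0) simp
      then obtain z1 z2 where z: "z1 \<in> Z" "z2 \<in> Z" "gmul n z1 (ginv n z2) = g" by blast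
      obtain k1 where k1: "fst z1 = int n * (int n * k1)" "snd z1 \<in> R" using Z_form[OF z(1)] by blast
      obtain k2 where k2: "fst z2 = int n * (int n * k2)" "snd z2 \<in> R" using Z_form[OF z(2)] by blast
      have "snd g = (snd z1 + (- snd z2) mod int n) mod int n" using z(3) by (auto simp: gmul_def ginv_def)
      also have "\<dots> = (snd z1 - snd z2) mod int n" by (simp add: mod_add_right_eq)
      finally have "snd g \<in> R" using zsub_diff[OF n1 RZ k1(2) k2(2)] by simp
      moreover have "fst g = 0" using g unfolding Znpart_def by auto
      ultimately show "g \<in> Q" unfolding Q_def by (intro image_eqI[where x="snd g"]) (auto simp: prod_eq_iff)
    qed
    have SQ: "S_subset D Q" unfolding Q_eq
      by (rule Ssub_Int[OF T_Ssub Ssub_pcnt[OF finZ SZ ginvZ]])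
    have Q_one: "gone \<in> Q" unfolding Q_def gone_def using RZ unfolding zsub_def by auto
    have Q_mul: "gmul n a b \<in> Q" if "a \<in> Q" "b \<in> Q" for a b
      using that RZ unfolding Q_def zsub_def by (auto simp: gmul_def)
    have Q_inv: "ginv n a \<in> Q" if "a \<in> Q" for a
      using that zsub_neg[OF n1 RZ] unfolding Q_def by (auto simp: ginv_def)
    have Q_sub: "S_subgroup n D Q" unfolding S_subgroup_def subgrp_def
      using SQ Qg Q_one Q_mul Q_inv by blast
    have QT: "Q \<subseteq> Znpart n" unfolding Q_def Znpart_def using Rs_grp R_def by auto
    have Qne: "Q \<noteq> {gone}"
    proof
      assume "Q = {gone}"
      moreover have "(0, d0) \<in> Q" unfolding Q_def using d0 by blast
      ultimately show False using d0 by (simp add: gone_def)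
    qed
    have ccQ: "cc D (pcnt n Q C)" by (rule cc_pcnt[OF finQ SQ finC SC])
    obtain x0 where x0: "x0 \<in> lay ks"
    proof -
      have "lay ks \<noteq> {}" using ks(1) s1 by (intro card_ne0) simp
      then show ?thesis using that by blast
    qed
    have x0C: "x0 \<in> C" "fst x0 = ks" using x0 unfolding lay_def by auto
    have pc: "pcnt n Q C g = card {u\<in>Q. gmul n (ginv n u) g \<in> C}" if "g \<in> grp n" for g
      unfolding pcnt_def by (rule card_pairs_u[OF n1 that Qg Cg])
    have at_x0: "{u\<in>Q. gmul n (ginv n u) x0 \<in> C} = Q"
    proof -
      have "gmul n (ginv n u) x0 \<in> C" if "u \<in> Q" for u
      proof -
        obtain e where e: "u = (0, e)" "e \<in> R" using \<open>u \<in> Q\<close> unfolding Q_def by blast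
        have ne: "(- e) mod int n \<in> Rs ks" using zsub_neg[OF n1 RZ e(2)] R_def by simp
        have "(ks, (snd x0 + (- e) mod int n) mod int n) \<in> C" using ne x0 unfolding Rs_def by blast
        moreover have "gmul n (ginv n u) x0 = (ks, (snd x0 + (- e) mod int n) mod int n)"
          using e x0C by (simp add: gmul_def ginv_def add.commute)
        ultimately show ?thesis by simp
      qed
      then show ?thesis by blast
    qed
    have allC: "gmul n (ginv n u) g \<in> C" if g: "g \<in> C" and u: "u \<in> Q" for g u
    proof -
      have gG: "g \<in> grp n" using Cg g by blast
      have x0G: "x0 \<in> grp n" using Cg x0C(1) by blast
      have pe: "pcnt n Q C g = pcnt n Q C x0" using ccQ C g x0C(1) unfolding cc_def by blast
      have "card {u\<in>Q. gmul n (ginv n u) g \<in> C} = pcnt n Q C g" using pc[OF gG] by simp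
      also have "\<dots> = pcnt n Q C x0" by (rule pe)
      also have "\<dots> = card {u\<in>Q. gmul n (ginv n u) x0 \<in> C}" by (rule pc[OF x0G])
      also have "\<dots> = card Q" using at_x0 by simp
      finally have "card {u\<in>Q. gmul n (ginv n u) g \<in> C} = card Q" .
      then have "{u\<in>Q. gmul n (ginv n u) g \<in> C} = Q"
        by (intro card_subset_eq[OF finQ]) auto
      then show ?thesis using u by blast
    qed
    have closed: "gmul n g u \<in> C" if g: "g \<in> C" and u: "u \<in> Q" for g u
    proof -
      have "ginv n u \<in> Q" by (rule Q_inv[OF u])
      then have "gmul n (ginv n (ginv n u)) g \<in> C" by (rule allC[OF g])
      moreover have "ginv n (ginv n u) = u" using ginv_ginv Qg u by blast
      ultimately show ?thesis by (simp add: gmul_comm)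
    qed
    have "C = (\<Union>x\<in>C. gmul n x ` Q)"
    proof
      show "C \<subseteq> (\<Union>x\<in>C. gmul n x ` Q)"
      proof
        fix x assume x: "x \<in> C"
        have "gmul n x gone = x" using gmul_one2 Cg x by blast
        have "x \<in> gmul n x ` Q" by (rule image_eqI[where x=gone]) (use \<open>gmul n x gone = x\<close> Q_one in auto)
        then show "x \<in> (\<Union>x\<in>C. gmul n x ` Q)" using x by blast
      qed
      show "(\<Union>x\<in>C. gmul n x ` Q) \<subseteq> C" using closed by blast
    qed
    then show ?thesis using Q_sub QT Qne by blast
  qed
qed

end

theorem theorem3p2:
  fixes F :: "'f::field_char_0 itself"
    and n m :: nat
    and D :: "(int \<times> int) set set"
    and H :: "(int \<times> int) set"
  assumes npos: "n \<ge> 1"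
    and S: "schur_ring F n D"
    and H_Ssub: "S_subgroup n D H" and H_Z: "H \<subseteq> Zpart"
    and H_max: "\<forall>H'. S_subgroup n D H' \<and> H' \<subseteq> Zpart \<longrightarrow> H' \<subseteq> H"
    and H_index: "H = (\<lambda>k. (int m * k, 0)) ` UNIV"
    and dvd: "n dvd m"
  shows "\<forall>C\<in>D. C \<subseteq> grp n - {(x, y). x \<in> (\<lambda>k. int (m div n) * k) ` UNIV \<and> y \<in> {0..<int n}} \<longrightarrow>
           (\<exists>L. S_subgroup n D L \<and> L \<subseteq> Znpart n \<and> L \<noteq> {gone} \<and>
                (\<exists>X. C = (\<Union>x\<in>X. gmul n x ` L)))"
proof (intro ballI impI)
  fix C assume C: "C \<in> D" and Cout: "C \<subseteq> grp n - {(x, y). x \<in> (\<lambda>k. int (m div n) * k) ` UNIV \<and> y \<in> {0..<int n}}"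
  interpret SR F n D by (unfold_locales) (rule npos, rule S)
  show "\<exists>L. S_subgroup n D L \<and> L \<subseteq> Znpart n \<and> L \<noteq> {gone} \<and> (\<exists>X. C = (\<Union>x\<in>X. gmul n x ` L))"
    by (rule main[OF H_max H_index dvd C Cout])
qed


end
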